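(* Let $\Lambda$ be a quantum channel (completely positive trace-preserving map) from $B(\mathbb{C}^d)$ to $B(\mathbb{C}^{d'})$, and let $\varrho(\Lambda)=(\mathrm{id}\otimes\Lambda)(P_+)$ be the state isomorphic to it, where $P_+=|\Psi_+\rangle\langle\Psi_+|$, $|\Psi_+\rangle=\frac{1}{\sqrt d}\sum_{i=1}^d|ii\rangle$. If $\varrho(\Lambda)$ is symmetrically extendible, then the one-way quantum capacity $Q_{\rightarrow}(\Lambda)$ of $\Lambda$ is zero.
   Context: A state $\rho_{AB}$ on $\mathcal{H}_A\otimes\mathcal{H}_B$ is called symmetrically extendible if there is a state $\rho_{ABB'}$ on $\mathcal{H}_A\otimes\mathcal{H}_B\otimes\mathcal{H}_{B'}$, with $\mathcal{H}_{B'}\cong\mathcal{H}_B$, such that $\rho_{ABB'}$ is invariant under the swap of $B$ and $B'$ and $\mathrm{Tr}_{B'}\rho_{ABB'}=\rho_{AB}$. $Q_{\rightarrow}(\Lambda)$ denotes the quantum capacity of $\Lambda$ when the sender and receiver are additionally allowed unlimited forward classical communication from sender to receiver. *)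

theory Defs
  imports Complex_Main "HOL-Library.Extended_Real" "Jordan_Normal_Form.Matrix"
begin

text \<open>Tensor product indices: for a system of dimensions d1 (first factor) and
  d2 (second factor), the pair (i,k) corresponds to the index i*d2+k.\<close>

definition mtrace :: "complex mat \<Rightarrow> complex" where
  "mtrace A = (\<Sum>i<dim_row A. A $$ (i,i))"

definition psd :: "nat \<Rightarrow> complex mat \<Rightarrow> bool" where
  "psd n A \<longleftrightarrow> A \<in> carrier_mat n n \<and>
     (\<forall>v :: nat \<Rightarrow> complex.
        Im (\<Sum>i<n. \<Sum>j<n. cnj (v i) * A $$ (i,j) * v j) = 0 \<and>
        Re (\<Sum>i<n. \<Sum>j<n. cnj (v i) * A $$ (i,j) * v j) \<ge> 0)"

definition density :: "nat \<Rightarrow> complex mat \<Rightarrow> bool" where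
  "density n \<rho> \<longleftrightarrow> psd n \<rho> \<and> mtrace \<rho> = 1"

definition munit :: "nat \<Rightarrow> nat \<Rightarrow> nat \<Rightarrow> complex mat" where
  "munit d i j = mat d d (\<lambda>(a,b). if a = i \<and> b = j then 1 else 0)"

definition kron :: "complex mat \<Rightarrow> complex mat \<Rightarrow> complex mat" where
  "kron A B = mat (dim_row A * dim_row B) (dim_col A * dim_col B)
     (\<lambda>(i,j). A $$ (i div dim_row B, j div dim_col B) * B $$ (i mod dim_row B, j mod dim_col B))"

text \<open>Tensor product of linear maps, defined by linear extension from matrix units:
  Phi1 : B(C^d1) -> B(C^e1), Phi2 : B(C^d2) -> B(C^e2).\<close>
definition tensor_map ::
  "(complex mat \<Rightarrow> complex mat) \<Rightarrow> nat \<Rightarrow> nat \<Rightarrow>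
   (complex mat \<Rightarrow> complex mat) \<Rightarrow> nat \<Rightarrow> nat \<Rightarrow> complex mat \<Rightarrow> complex mat" where
  "tensor_map \<Phi>1 d1 e1 \<Phi>2 d2 e2 M = mat (e1*e2) (e1*e2) (\<lambda>(r,c).
      \<Sum>i<d1. \<Sum>j<d1. \<Sum>k<d2. \<Sum>l<d2.
        M $$ (i*d2+k, j*d2+l) * (kron (\<Phi>1 (munit d1 i j)) (\<Phi>2 (munit d2 k l))) $$ (r,c))"

definition lin_map :: "nat \<Rightarrow> (complex mat \<Rightarrow> complex mat) \<Rightarrow> bool" where
  "lin_map din \<Phi> \<longleftrightarrow> (\<forall>A \<in> carrier_mat din din. \<forall>B \<in> carrier_mat din din. \<forall>a::complex.
      \<Phi> (A + B) = \<Phi> A + \<Phi> B \<and> \<Phi> (a \<cdot>\<^sub>m A) = a \<cdot>\<^sub>m \<Phi> A)"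

definition cp_map :: "nat \<Rightarrow> nat \<Rightarrow> (complex mat \<Rightarrow> complex mat) \<Rightarrow> bool" where
  "cp_map din dout \<Phi> \<longleftrightarrow> lin_map din \<Phi> \<and>
     (\<forall>A \<in> carrier_mat din din. \<Phi> A \<in> carrier_mat dout dout) \<and>
     (\<forall>m M. psd (m*din) M \<longrightarrow> psd (m*dout) (tensor_map (\<lambda>X. X) m m \<Phi> din dout M))"

definition tp_map :: "nat \<Rightarrow> (complex mat \<Rightarrow> complex mat) \<Rightarrow> bool" where
  "tp_map din \<Phi> \<longleftrightarrow> (\<forall>A \<in> carrier_mat din din. mtrace (\<Phi> A) = mtrace A)"

definition channel :: "nat \<Rightarrow> nat \<Rightarrow> (complex mat \<Rightarrow> complex mat) \<Rightarrow> bool" where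
  "channel din dout \<Phi> \<longleftrightarrow> cp_map din dout \<Phi> \<and> tp_map din \<Phi>"

primrec tensor_pow ::
  "(complex mat \<Rightarrow> complex mat) \<Rightarrow> nat \<Rightarrow> nat \<Rightarrow> nat \<Rightarrow> complex mat \<Rightarrow> complex mat" where
  "tensor_pow \<Phi> din dout 0 = (\<lambda>M. M)"
| "tensor_pow \<Phi> din dout (Suc n) =
     tensor_map \<Phi> din dout (tensor_pow \<Phi> din dout n) (din^n) (dout^n)"

definition Pplus :: "nat \<Rightarrow> complex mat" where
  "Pplus d = mat (d*d) (d*d) (\<lambda>(r,c).
     if r div d = r mod d \<and> c div d = c mod d then 1 / of_nat d else 0)"

definition choi :: "nat \<Rightarrow> nat \<Rightarrow> (complex mat \<Rightarrow> complex mat) \<Rightarrow> complex mat" where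
  "choi d d' \<Lambda> = tensor_map (\<lambda>X. X) d d \<Lambda> d d' (Pplus d)"

definition ptrace_last :: "nat \<Rightarrow> nat \<Rightarrow> complex mat \<Rightarrow> complex mat" where
  "ptrace_last da db M = mat da da (\<lambda>(i,j). \<Sum>k<db. M $$ (i*db+k, j*db+k))"

text \<open>Symmetric extendibility of a state on C^dA (x) C^dB: there is a state on
  C^dA (x) C^dB (x) C^dB invariant under swapping the last two factors
  (stated entrywise) whose partial trace over the last factor is rho.\<close>
definition sym_extendible :: "nat \<Rightarrow> nat \<Rightarrow> complex mat \<Rightarrow> bool" where
  "sym_extendible dA dB \<rho> \<longleftrightarrow> density (dA*dB) \<rho> \<and>
     (\<exists>\<sigma>. density (dA*dB*dB) \<sigma> \<and>
        (\<forall>a b b' c e e'. a < dA \<longrightarrow> b < dB \<longrightarrow> b' < dB \<longrightarrow> c < dA \<longrightarrow> e < dB \<longrightarrow> e' < dB \<longrightarrow>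
           \<sigma> $$ ((a*dB+b)*dB+b', (c*dB+e)*dB+e') = \<sigma> $$ ((a*dB+b')*dB+b, (c*dB+e')*dB+e)) \<and>
        ptrace_last (dA*dB) dB \<sigma> = \<rho>)"

text \<open>Entanglement fidelity <Phi_K| X |Phi_K> with the maximally entangled state of C^K (x) C^K.\<close>
definition ent_fid :: "nat \<Rightarrow> complex mat \<Rightarrow> real" where
  "ent_fid K X = Re ((1 / of_nat K) * (\<Sum>i<K. \<Sum>j<K. X $$ (i*K+i, j*K+j)))"

text \<open>A one-way (forward classical communication assisted) protocol for sending a
  K-dimensional quantum system through n uses of Lambda: the sender applies an instrument
  (CP maps Es ! x, summing to a trace-preserving map) from B(C^K) to the n channel inputs,
  sends the outcome x classically, and the receiver applies the channel Ds ! x from the n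
  channel outputs to B(C^K).\<close>
definition oneway_protocol ::
  "nat \<Rightarrow> nat \<Rightarrow> nat \<Rightarrow> nat \<Rightarrow> (complex mat \<Rightarrow> complex mat) list \<Rightarrow> (complex mat \<Rightarrow> complex mat) list \<Rightarrow> bool" where
  "oneway_protocol d d' n K Es Ds \<longleftrightarrow> length Ds = length Es \<and>
     (\<forall>x < length Es. cp_map K (d^n) (Es ! x)) \<and>
     (\<forall>A \<in> carrier_mat K K. (\<Sum>x<length Es. mtrace ((Es ! x) A)) = mtrace A) \<and>
     (\<forall>x < length Ds. channel (d'^n) K (Ds ! x))"

definition protocol_fid ::
  "nat \<Rightarrow> nat \<Rightarrow> (complex mat \<Rightarrow> complex mat) \<Rightarrow> nat \<Rightarrow> nat \<Rightarrow>
   (complex mat \<Rightarrow> complex mat) list \<Rightarrow> (complex mat \<Rightarrow> complex mat) list \<Rightarrow> real" where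
  "protocol_fid d d' \<Lambda> n K Es Ds = (\<Sum>x<length Es.
     ent_fid K (tensor_map (\<lambda>X. X) K K
        (\<lambda>M. (Ds ! x) (tensor_pow \<Lambda> d d' n ((Es ! x) M))) K K (Pplus K)))"

definition oneway_achievable :: "nat \<Rightarrow> nat \<Rightarrow> (complex mat \<Rightarrow> complex mat) \<Rightarrow> real \<Rightarrow> bool" where
  "oneway_achievable d d' \<Lambda> R \<longleftrightarrow>
     (\<forall>\<epsilon>>0. \<forall>\<delta>>0. \<exists>N. \<forall>n\<ge>N. \<exists>K Es Ds. K \<ge> 1 \<and>
        log 2 (real K) \<ge> real n * (R - \<delta>) \<and>
        oneway_protocol d d' n K Es Ds \<and>
        protocol_fid d d' \<Lambda> n K Es Ds \<ge> 1 - \<epsilon>)"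

definition Q_oneway :: "nat \<Rightarrow> nat \<Rightarrow> (complex mat \<Rightarrow> complex mat) \<Rightarrow> ereal" where
  "Q_oneway d d' \<Lambda> = Sup (ereal ` {R. 0 \<le> R \<and> oneway_achievable d d' \<Lambda> R})"

end

theory Submission
  imports Defs
begin

definition qf :: "nat \<Rightarrow> (nat \<Rightarrow> nat \<Rightarrow> complex) \<Rightarrow> (nat \<Rightarrow> complex) \<Rightarrow> complex" where
  "qf n A v = (\<Sum>i<n. \<Sum>j<n. cnj (v i) * A i j * v j)"

definition pf :: "nat \<Rightarrow> (nat \<Rightarrow> nat \<Rightarrow> complex) \<Rightarrow> bool" where
  "pf n A \<longleftrightarrow> (\<forall>v. 0 \<le> qf n A v)"

lemma psd_pf: "psd n A \<Longrightarrow> pf n (\<lambda>i j. A $$ (i,j))"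
  unfolding psd_def pf_def qf_def by (auto simp: less_eq_complex_def)

lemma pf_psd: "A \<in> carrier_mat n n \<Longrightarrow> pf n (\<lambda>i j. A $$ (i,j)) \<Longrightarrow> psd n A"
  unfolding psd_def pf_def qf_def by (auto simp: less_eq_complex_def)

lemma qf_two: fixes A :: "nat \<Rightarrow> nat \<Rightarrow> complex"
  assumes "p < n" "q < n" "p \<noteq> q"
  shows "qf n A (\<lambda>k. (if k = p then a else 0) + (if k = q then b else 0)) =
    cnj a * A p p * a + cnj a * A p q * b + cnj b * A q p * a + cnj b * A q q * b"
proof -
  let ?v = "\<lambda>k. (if k = p then a else 0) + (if k = q then b else 0)"
  have inner: "\<And>i. (\<Sum>j<n. cnj (?v i) * A i j * ?v j) = cnj (?v i) * (A i p * a + A i q * b)"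
  proof -
    fix i
    have "(\<Sum>j<n. cnj (?v i) * A i j * ?v j) = cnj (?v i) * (\<Sum>j<n. A i j * ?v j)"
      by (simp add: sum_distrib_left mult.assoc)
    also have "(\<Sum>j<n. A i j * ?v j) = (\<Sum>j<n. (if j = p then A i j * a else 0) + (if j = q then A i j * b else 0))"
      by (rule sum.cong) (auto simp: distrib_left)
    also have "\<dots> = A i p * a + A i q * b" using assms by (simp add: sum.distrib)
    finally show "?thesis i" .
  qed
  have "qf n A ?v = (\<Sum>i<n. cnj (?v i) * (A i p * a + A i q * b))"
    unfolding qf_def by (rule sum.cong[OF refl], rule inner)
  also have "\<dots> = (\<Sum>i<n. (if i = p then cnj a * (A i p * a + A i q * b) else 0) + (if i = q then cnj b * (A i p * a + A i q * b) else 0))"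
    by (rule sum.cong) (auto simp: distrib_right)
  also have "\<dots> = cnj a * (A p p * a + A p q * b) + cnj b * (A q p * a + A q q * b)"
    using assms by (simp add: sum.distrib)
  finally show ?thesis by (simp add: algebra_simps)
qed

lemma qf_one: fixes A :: "nat \<Rightarrow> nat \<Rightarrow> complex"
  assumes "p < n"
  shows "qf n A (\<lambda>k. if k = p then a else 0) = cnj a * A p p * a"
proof -
  have "qf n A (\<lambda>k. if k = p then a else 0) = (\<Sum>i<n. if i = p then cnj a * A p p * a else 0)"
    unfolding qf_def
  proof (rule sum.cong[OF refl])
    fix i assume "i \<in> {..<n}"
    have "(\<Sum>j<n. cnj (if i = p then a else 0) * A i j * (if j = p then a else 0)) =
       (\<Sum>j<n. if j = p then cnj (if i = p then a else 0) * A i j * a else 0)"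
      by (rule sum.cong) auto
    also have "\<dots> = cnj (if i = p then a else 0) * A i p * a" using assms by simp
    finally show "(\<Sum>j<n. cnj (if i = p then a else 0) * A i j * (if j = p then a else 0)) =
       (if i = p then cnj a * A p p * a else 0)" by auto
  qed
  also have "\<dots> = cnj a * A p p * a" using assms by simp
  finally show ?thesis .
qed

lemma pf_diag: "pf n A \<Longrightarrow> p < n \<Longrightarrow> 0 \<le> A p p"
  using qf_one[of p n A 1] unfolding pf_def by (metis complex_cnj_one mult_1 mult.right_neutral)

lemma pf_herm:
  assumes "pf n A" "p < n" "q < n"
  shows "A q p = cnj (A p q)"
proof (cases "p = q")
  case True
  then show ?thesis using pf_diag[OF assms(1,2)] by (simp add: less_eq_complex_def complex_eq_iff)
next
  case False
  have dp: "Im (A p p) = 0" "Im (A q q) = 0" using pf_diag[OF assms(1,2)] pf_diag[OF assms(1,3)]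
    by (auto simp: less_eq_complex_def)
  have h1: "0 \<le> qf n A (\<lambda>k. (if k = p then 1 else 0) + (if k = q then 1 else 0))"
    using assms(1) unfolding pf_def by blast
  have h2: "0 \<le> qf n A (\<lambda>k. (if k = p then 1 else 0) + (if k = q then \<i> else 0))"
    using assms(1) unfolding pf_def by blast
  from h1 have "Im (A p q + A q p) = 0"
    unfolding qf_two[OF assms(2,3) False] using dp by (simp add: less_eq_complex_def)
  moreover from h2 have "Re (A p q - A q p) = 0"
    unfolding qf_two[OF assms(2,3) False] using dp by (simp add: less_eq_complex_def)
  ultimately show ?thesis by (simp add: complex_eq_iff)
qed

lemma qf_Suc: "qf (Suc n) A w = qf n A w + (\<Sum>i<n. cnj (w i) * A i n) * w n
   + cnj (w n) * (\<Sum>j<n. A n j * w j) + cnj (w n) * A n n * w n"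
  by (simp add: qf_def sum.distrib sum_distrib_left sum_distrib_right algebra_simps)

lemma qf_cong: "(\<And>k. k < n \<Longrightarrow> v k = w k) \<Longrightarrow> qf n A v = qf n A w"
  unfolding qf_def by (intro sum.cong) auto

lemma pf_Suc_D: assumes "pf (Suc n) A" shows "pf n A"
  unfolding pf_def
proof
  fix v :: "nat \<Rightarrow> complex"
  let ?w = "\<lambda>k. if k < n then v k else 0"
  have "qf n A v = qf n A ?w" by (rule qf_cong) simp
  also have "\<dots> = qf (Suc n) A ?w" by (simp add: qf_Suc)
  finally have "qf n A v = qf (Suc n) A ?w" .
  then show "0 \<le> qf n A v" using assms unfolding pf_def by simp
qed

lemma pf_zero_row:
  assumes "pf m A" "p < m" "A p p = 0" "c < m"
  shows "A p c = 0"
proof (rule ccontr)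
  assume ne: "A p c \<noteq> 0"
  then have pc: "p \<noteq> c" using assms by auto
  have h: "A c p = cnj (A p c)" using pf_herm[OF assms(1,2,4)] .
  define x where "x = (Re (A c c) + 1) / (2 * (cmod (A p c))^2)"
  have pos: "(cmod (A p c))^2 > 0" using ne by simp
  let ?s = "- complex_of_real x * A p c"
  have "0 \<le> qf m A (\<lambda>k. (if k = p then ?s else 0) + (if k = c then 1 else 0))"
    using assms(1) unfolding pf_def by blast
  then have "0 \<le> Re (cnj ?s * A p p * ?s + cnj ?s * A p c * 1 + cnj 1 * A c p * ?s + cnj 1 * A c c * 1)"
    unfolding qf_two[OF assms(2,4) pc] by (simp add: less_eq_complex_def)
  also have "Re (cnj ?s * A p p * ?s + cnj ?s * A p c * 1 + cnj 1 * A c p * ?s + cnj 1 * A c c * 1)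
     = Re (A c c) - 2 * x * (cmod (A p c))^2"
    using assms(3) h cmod_power2[of "A p c"] by (simp add: algebra_simps power2_eq_square)
  also have "\<dots> = -1" using pos unfolding x_def by (simp add: field_simps)
  finally show False by simp
qed

lemma gram: "pf n A \<Longrightarrow> \<exists>g. \<forall>r<n. \<forall>c<n. A r c = (\<Sum>m<n. g m r * cnj (g m c))"
proof (induction n arbitrary: A)
  case 0
  then show ?case by simp
next
  case (Suc n)
  have pfn: "pf n A" using pf_Suc_D[OF Suc.prems] .
  have herm: "\<And>p q. p < Suc n \<Longrightarrow> q < Suc n \<Longrightarrow> A q p = cnj (A p q)"
    using pf_herm[OF Suc.prems] by blast
  show ?case
  proof (cases "A n n = 0")
    case True
    have z1: "\<And>c. c < Suc n \<Longrightarrow> A n c = 0" using pf_zero_row[OF Suc.prems _ True] by simp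
    have z2: "\<And>c. c < Suc n \<Longrightarrow> A c n = 0" using z1 herm by (metis complex_cnj_zero lessI)
    obtain g where g: "\<forall>r<n. \<forall>c<n. A r c = (\<Sum>m<n. g m r * cnj (g m c))" using Suc.IH[OF pfn] by blast
    define g' where "g' m r = (if m < n \<and> r < n then g m r else 0)" for m r
    have "\<forall>r<Suc n. \<forall>c<Suc n. A r c = (\<Sum>m<Suc n. g' m r * cnj (g' m c))"
    proof (intro allI impI)
      fix r c assume r: "r < Suc n" and c: "c < Suc n"
      show "A r c = (\<Sum>m<Suc n. g' m r * cnj (g' m c))"
      proof (cases "r < n \<and> c < n")
        case True
        then show ?thesis using g by (simp add: g'_def)
      next
        case False
        then have "r = n \<or> c = n" using r c by auto
        then show ?thesis using z1 z2 r c by (auto simp: g'_def)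
      qed
    qed
    then show ?thesis by blast
  next
    case False
    define a where "a = A n n"
    have a0: "0 \<le> a" using pf_diag[OF Suc.prems] unfolding a_def by simp
    define a' where "a' = Re a"
    have aa': "a = complex_of_real a'" using a0 unfolding a'_def by (simp add: less_eq_complex_def complex_eq_iff)
    have a'pos: "a' > 0" using a0 False unfolding a'_def a_def by (auto simp: less_eq_complex_def complex_eq_iff)
    define A' where "A' r c = A r c - A r n * A n c / a" for r c
    have pfA': "pf n A'"
      unfolding pf_def
    proof
      fix v
      define s where "s = (\<Sum>j<n. A n j * v j)"
      define w where "w k = (if k < n then v k else - s / a)" for k
      have e1: "qf n A' v = qf n A v - (\<Sum>i<n. cnj (v i) * A i n) * s / a"
        unfolding qf_def A'_def s_def
        by (simp add: sum_subtractf sum_distrib_left sum_distrib_right sum_divide_distrib algebra_simps)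
      have e2: "qf (Suc n) A w = qf n A v + (\<Sum>i<n. cnj (v i) * A i n) * (- s / a)
          + cnj (- s / a) * (s + a * (- s / a))"
        unfolding qf_Suc using qf_cong[of n w v A] unfolding w_def s_def a_def
        by (simp add: algebra_simps)
      have "s + a * (- s / a) = 0" using False unfolding a_def by simp
      then have "qf (Suc n) A w = qf n A' v" using e1 e2 by simp
      then show "0 \<le> qf n A' v" using Suc.prems unfolding pf_def by metis
    qed
    obtain g where g: "\<forall>r<n. \<forall>c<n. A' r c = (\<Sum>m<n. g m r * cnj (g m c))" using Suc.IH[OF pfA'] by blast
    define g' where "g' m r = (if m < n then (if r < n then g m r else 0) else A r n / complex_of_real (sqrt a'))" for m r
    have last: "\<And>r c. r < Suc n \<Longrightarrow> c < Suc n \<Longrightarrow> g' n r * cnj (g' n c) = A r n * A n c / a"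
    proof -
      fix r c assume r: "r < Suc n" and c: "c < Suc n"
      have "cnj (A c n) = A n c" using herm[OF lessI c] by simp
      moreover have "complex_of_real (sqrt a') * complex_of_real (sqrt a') = a"
      proof -
        have "sqrt a' * sqrt a' = a'" using a'pos by simp
        then show ?thesis unfolding aa' by (metis of_real_mult)
      qed
      ultimately show "g' n r * cnj (g' n c) = A r n * A n c / a"
        unfolding g'_def by (simp add: field_simps)
    qed
    have "\<forall>r<Suc n. \<forall>c<Suc n. A r c = (\<Sum>m<Suc n. g' m r * cnj (g' m c))"
    proof (intro allI impI)
      fix r c assume r: "r < Suc n" and c: "c < Suc n"
      have "(\<Sum>m<Suc n. g' m r * cnj (g' m c)) = (\<Sum>m<n. g' m r * cnj (g' m c)) + A r n * A n c / a"
        using last[OF r c] by simp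
      moreover have "(\<Sum>m<n. g' m r * cnj (g' m c)) = (if r < n \<and> c < n then A' r c else 0)"
        using g by (auto simp: g'_def)
      moreover have "A r n * A n c / a + 0 = A r c" if "\<not> (r < n \<and> c < n)"
      proof -
        have "r = n \<or> c = n" using that r c by auto
        then show ?thesis using False unfolding a_def by auto
      qed
      ultimately show "A r c = (\<Sum>m<Suc n. g' m r * cnj (g' m c))"
        unfolding A'_def by auto
    qed
    then show ?thesis by blast
  qed
qed

lemma munit_carrier[simp]: "munit d i j \<in> carrier_mat d d"
  by (simp add: munit_def)

lemma munit_dim[simp]: "dim_row (munit d i j) = d" "dim_col (munit d i j) = d"
  by (simp_all add: munit_def)

lemma munit_index[simp]: "a < d \<Longrightarrow> b < d \<Longrightarrow> munit d i j $$ (a,b) = (if a = i \<and> b = j then 1 else 0)"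
  by (simp add: munit_def)

lemma tm_carrier[simp]: "tensor_map \<Phi>1 d1 e1 \<Phi>2 d2 e2 M \<in> carrier_mat (e1*e2) (e1*e2)"
  by (simp add: tensor_map_def)

lemma tm_index:
  assumes h1: "\<And>i j. i<d1 \<Longrightarrow> j<d1 \<Longrightarrow> \<Phi>1 (munit d1 i j) \<in> carrier_mat e1 e1"
  and h2: "\<And>k l. k<d2 \<Longrightarrow> l<d2 \<Longrightarrow> \<Phi>2 (munit d2 k l) \<in> carrier_mat e2 e2"
  and r: "r < e1*e2" and c: "c < e1*e2"
  shows "tensor_map \<Phi>1 d1 e1 \<Phi>2 d2 e2 M $$ (r,c) = (\<Sum>i<d1. \<Sum>j<d1. \<Sum>k<d2. \<Sum>l<d2.
     M $$ (i*d2+k, j*d2+l) * (\<Phi>1 (munit d1 i j) $$ (r div e2, c div e2) * \<Phi>2 (munit d2 k l) $$ (r mod e2, c mod e2)))"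
  unfolding tensor_map_def using r c
  apply (simp add: index_mat)
  apply (intro sum.cong refl)
  subgoal for i j k l using h1[of i j] h2[of k l] r c by (auto simp: kron_def)
  done

lemma mult_if_1: "(if P then 1 else 0) * (x::'a::comm_ring_1) = (if P then x else 0)"
  by simp

lemma sum2_delta:
  fixes f :: "nat \<Rightarrow> nat \<Rightarrow> 'a::comm_ring_1"
  assumes "a < n" "b < m"
  shows "(\<Sum>k<n. \<Sum>l<m. (if k = a \<and> l = b then 1 else 0) * f k l) = f a b"
proof -
  have "(\<Sum>k<n. \<Sum>l<m. (if k = a \<and> l = b then 1 else 0) * f k l) = (\<Sum>k<n. if k = a then (\<Sum>l<m. if l = b then f k l else 0) else 0)"
  proof (intro sum.cong refl)
    fix k assume "k \<in> {..<n}"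
    show "(\<Sum>l<m. (if k = a \<and> l = b then 1 else 0) * f k l) = (if k = a then (\<Sum>l<m. if l = b then f k l else 0) else 0)"
      by (cases "k = a") (auto intro: sum.cong simp: mult_if_1)
  qed
  also have "\<dots> = f a b" using assms by simp
  finally show ?thesis .
qed

lemma ti_index:
  assumes h2: "\<And>k l. k<d2 \<Longrightarrow> l<d2 \<Longrightarrow> \<Phi> (munit d2 k l) \<in> carrier_mat e2 e2"
  and r: "r < m*e2" and c: "c < m*e2"
  shows "tensor_map (\<lambda>X. X) m m \<Phi> d2 e2 M $$ (r,c) = (\<Sum>k<d2. \<Sum>l<d2.
     M $$ ((r div e2)*d2+k, (c div e2)*d2+l) * \<Phi> (munit d2 k l) $$ (r mod e2, c mod e2))"
proof -
  have rd: "r div e2 < m" and cd: "c div e2 < m" using r c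
    by (auto simp: less_mult_imp_div_less mult.commute)
  have "tensor_map (\<lambda>X. X) m m \<Phi> d2 e2 M $$ (r,c) = (\<Sum>i<m. \<Sum>j<m. \<Sum>k<d2. \<Sum>l<d2.
     M $$ (i*d2+k, j*d2+l) * (munit m i j $$ (r div e2, c div e2) * \<Phi> (munit d2 k l) $$ (r mod e2, c mod e2)))"
    using tm_index[of m "\<lambda>X. X" m d2 \<Phi> e2 r c M, OF _ h2 r c] by simp
  also have "\<dots> = (\<Sum>i<m. \<Sum>j<m. (if i = r div e2 \<and> j = c div e2 then 1 else 0) * (\<Sum>k<d2. \<Sum>l<d2.
     M $$ (i*d2+k, j*d2+l) * \<Phi> (munit d2 k l) $$ (r mod e2, c mod e2)))"
  proof (intro sum.cong refl)
    fix i j assume "i \<in> {..<m}" "j \<in> {..<m}"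
    then show "(\<Sum>k<d2. \<Sum>l<d2. M $$ (i*d2+k, j*d2+l) * (munit m i j $$ (r div e2, c div e2) * \<Phi> (munit d2 k l) $$ (r mod e2, c mod e2))) =
      (if i = r div e2 \<and> j = c div e2 then 1 else 0) * (\<Sum>k<d2. \<Sum>l<d2.
     M $$ (i*d2+k, j*d2+l) * \<Phi> (munit d2 k l) $$ (r mod e2, c mod e2))"
      using rd cd by (cases "i = r div e2 \<and> j = c div e2") auto
  qed
  also have "\<dots> = (\<Sum>k<d2. \<Sum>l<d2.
     M $$ ((r div e2)*d2+k, (c div e2)*d2+l) * \<Phi> (munit d2 k l) $$ (r mod e2, c mod e2))"
    by (rule sum2_delta[OF rd cd])
  finally show ?thesis .
qed

definition XS :: "nat \<Rightarrow> complex mat \<Rightarrow> (nat \<times> nat) set \<Rightarrow> complex mat" where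
  "XS n X S = mat n n (\<lambda>(a,b). if (a,b) \<in> S then X $$ (a,b) else 0)"

lemma lin_expand_set:
  assumes lin: "lin_map din \<Phi>" and car: "\<And>A. A \<in> carrier_mat din din \<Longrightarrow> \<Phi> A \<in> carrier_mat dout dout"
    and fin: "finite S" and sub: "S \<subseteq> {..<din} \<times> {..<din}" and b: "b < dout" and c: "c < dout"
  shows "\<Phi> (XS din X S) $$ (b,c) = (\<Sum>p\<in>S. X $$ p * \<Phi> (munit din (fst p) (snd p)) $$ (b,c))"
  using fin sub
proof (induction S rule: finite_induct)
  case empty
  have z: "XS din X {} = 0 \<cdot>\<^sub>m XS din X {}" by (auto simp: XS_def)
  have xc: "XS din X {} \<in> carrier_mat din din" by (simp add: XS_def)
  have "\<Phi> (0 \<cdot>\<^sub>m XS din X {}) = 0 \<cdot>\<^sub>m \<Phi> (XS din X {})"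
    using lin xc unfolding lin_map_def by blast
  then have e: "\<Phi> (XS din X {}) = 0 \<cdot>\<^sub>m \<Phi> (XS din X {})" using z by simp
  have "\<Phi> (XS din X {}) \<in> carrier_mat dout dout" using car xc by simp
  then have "(0 \<cdot>\<^sub>m \<Phi> (XS din X {})) $$ (b,c) = 0" using b c by simp
  then show ?case using e by simp
next
  case (insert p S)
  obtain k l where p: "p = (k,l)" by (cases p)
  have kl: "k < din" "l < din" using insert.prems p by auto
  have eq: "XS din X (insert p S) = XS din X S + X $$ p \<cdot>\<^sub>m munit din k l"
    using kl insert.hyps by (intro eq_matI) (auto simp: XS_def p)
  have c1: "XS din X S \<in> carrier_mat din din" by (simp add: XS_def)
  have c2: "X $$ p \<cdot>\<^sub>m munit din k l \<in> carrier_mat din din" by simp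
  have "\<Phi> (XS din X (insert p S)) = \<Phi> (XS din X S) + X $$ p \<cdot>\<^sub>m \<Phi> (munit din k l)"
    using lin c1 c2 unfolding eq lin_map_def by auto
  moreover have "\<Phi> (XS din X S) \<in> carrier_mat dout dout" "\<Phi> (munit din k l) \<in> carrier_mat dout dout"
    using car c1 by auto
  ultimately have "\<Phi> (XS din X (insert p S)) $$ (b,c) = \<Phi> (XS din X S) $$ (b,c) + X $$ p * \<Phi> (munit din k l) $$ (b,c)"
    using b c by simp
  then show ?case using insert by (simp add: p)
qed

lemma lin_expand:
  assumes lin: "lin_map din \<Phi>" and car: "\<And>A. A \<in> carrier_mat din din \<Longrightarrow> \<Phi> A \<in> carrier_mat dout dout"
    and X: "X \<in> carrier_mat din din" and b: "b < dout" and c: "c < dout"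
  shows "\<Phi> X $$ (b,c) = (\<Sum>k<din. \<Sum>l<din. X $$ (k,l) * \<Phi> (munit din k l) $$ (b,c))"
proof -
  have "XS din X ({..<din} \<times> {..<din}) = X" using X by (intro eq_matI) (auto simp: XS_def)
  then have "\<Phi> X $$ (b,c) = (\<Sum>p\<in>{..<din} \<times> {..<din}. X $$ p * \<Phi> (munit din (fst p) (snd p)) $$ (b,c))"
    using lin_expand_set[OF lin car _ _ b c, of "{..<din} \<times> {..<din}" X] by simp
  also have "\<dots> = (\<Sum>(k,l)\<in>{..<din} \<times> {..<din}. X $$ (k,l) * \<Phi> (munit din k l) $$ (b,c))"
    by (intro sum.cong) auto
  also have "\<dots> = (\<Sum>k<din. \<Sum>l<din. X $$ (k,l) * \<Phi> (munit din k l) $$ (b,c))"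
    by (simp add: sum.cartesian_product)
  finally show ?thesis .
qed

lemma idx_lt: "x < m \<Longrightarrow> k < d \<Longrightarrow> x*d + k < m*(d::nat)"
proof -
  assume "x < m" "k < d"
  then have "x*d + k < x*d + d" by simp
  also have "\<dots> = (x+1)*d" by simp
  also have "\<dots> \<le> m*d" using \<open>x < m\<close> by (intro mult_le_mono1) simp
  finally show ?thesis .
qed

lemma idx_div[simp]: "k < d \<Longrightarrow> (x*d+k) div d = (x::nat)"
  by simp

lemma idx_mod[simp]: "k < d \<Longrightarrow> (x*d+k) mod d = (k::nat)"
  by simp

lemma div_lt: "r < m*(d::nat) \<Longrightarrow> r div d < m"
  by (simp add: less_mult_imp_div_less)

lemma mod_lt: "r < m*(d::nat) \<Longrightarrow> r mod d < d"
  by (metis mod_less_divisor mult_0_right neq0_conv not_less0)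

lemma pf_cong: "(\<And>i j. i < n \<Longrightarrow> j < n \<Longrightarrow> A i j = B i j) \<Longrightarrow> pf n A \<Longrightarrow> pf n B"
proof -
  assume h: "\<And>i j. i < n \<Longrightarrow> j < n \<Longrightarrow> A i j = B i j" and p: "pf n A"
  have "qf n B v = qf n A v" for v unfolding qf_def by (intro sum.cong refl) (simp add: h)
  then show "pf n B" using p unfolding pf_def by simp
qed

lemma cnj_mult_self_nonneg: "0 \<le> cnj z * (z::complex)"
  using conjugate_square_positive[of z] by (simp add: mult.commute)

lemma cp_choi_pf:
  assumes cp: "cp_map din dout \<Phi>"
  shows "pf (din*dout) (\<lambda>r c. \<Phi> (munit din (r div dout) (c div dout)) $$ (r mod dout, c mod dout))"
proof -
  define P where "P r = (r div din = r mod din)" for r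
  define M where "M = mat (din*din) (din*din) (\<lambda>(r,c). if P r \<and> P c then 1 else (0::complex))"
  have "pf (din*din) (\<lambda>i j. M $$ (i,j))"
    unfolding pf_def
  proof
    fix v :: "nat \<Rightarrow> complex"
    define S where "S = (\<Sum>c<din*din. if P c then v c else 0)"
    have "qf (din*din) (\<lambda>i j. M $$ (i,j)) v = (\<Sum>i<din*din. \<Sum>j<din*din. (if P i then cnj (v i) else 0) * (if P j then v j else 0))"
      unfolding qf_def M_def by (intro sum.cong refl) auto
    also have "\<dots> = cnj S * S"
    proof -
      have c: "cnj S = (\<Sum>i<din*din. if P i then cnj (v i) else 0)"
        unfolding S_def cnj_sum by (intro sum.cong) auto
      show ?thesis unfolding c unfolding S_def sum_product by simp
    qed
    finally show "0 \<le> qf (din*din) (\<lambda>i j. M $$ (i,j)) v" using cnj_mult_self_nonneg by simp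
  qed
  then have "psd (din*din) M" by (intro pf_psd) (auto simp: M_def)
  then have ps: "psd (din*dout) (tensor_map (\<lambda>X. X) din din \<Phi> din dout M)"
    using cp unfolding cp_map_def by blast
  have h2: "\<And>k l. k<din \<Longrightarrow> l<din \<Longrightarrow> \<Phi> (munit din k l) \<in> carrier_mat dout dout"
    using cp unfolding cp_map_def by simp
  have "tensor_map (\<lambda>X. X) din din \<Phi> din dout M $$ (r,c) = \<Phi> (munit din (r div dout) (c div dout)) $$ (r mod dout, c mod dout)"
    if r: "r < din*dout" and c: "c < din*dout" for r c
  proof -
    have rd: "r div dout < din" and cd: "c div dout < din" using r c by (auto simp: div_lt)
    have "tensor_map (\<lambda>X. X) din din \<Phi> din dout M $$ (r,c) = (\<Sum>k<din. \<Sum>l<din.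
     M $$ ((r div dout)*din+k, (c div dout)*din+l) * \<Phi> (munit din k l) $$ (r mod dout, c mod dout))"
      by (rule ti_index) (auto intro: h2 simp: r c)
    also have "\<dots> = (\<Sum>k<din. \<Sum>l<din. (if k = r div dout \<and> l = c div dout then 1 else 0) * \<Phi> (munit din k l) $$ (r mod dout, c mod dout))"
      using rd cd by (intro sum.cong refl) (auto simp: M_def P_def idx_lt)
    also have "\<dots> = \<Phi> (munit din (r div dout) (c div dout)) $$ (r mod dout, c mod dout)"
      by (rule sum2_delta[OF rd cd])
    finally show ?thesis .
  qed
  then show ?thesis using pf_cong[OF _ psd_pf[OF ps]] by simp
qed

lemma Pplus_index:
  assumes "i < d" "j < d" "k < d" "l < d"
  shows "Pplus d $$ (i*d+k, j*d+l) = (if i = k \<and> j = l then 1 / of_nat d else 0)"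
  using assms by (simp add: Pplus_def idx_lt)

lemma sum_idx: "(\<Sum>I<a*b. f I) = (\<Sum>i<a. \<Sum>k<(b::nat). f (i*b+k))"
proof -
  have "(\<Sum>I<a*b. f I) = (\<Sum>i<a. sum f {i*b..<i*b+b})" by (simp add: sum.nat_group)
  also have "\<dots> = (\<Sum>i<a. \<Sum>k<b. f (i*b+k))"
  proof (rule sum.cong[OF refl])
    fix i
    have "sum f {0 + i*b..<b + i*b} = sum (\<lambda>k. f (k + i*b)) {0..<b}"
      by (rule sum.shift_bounds_nat_ivl)
    then show "sum f {i*b..<i*b+b} = (\<Sum>k<b. f (i*b+k))"
      by (simp add: atLeast0LessThan add.commute)
  qed
  finally show ?thesis .
qed

lemma sum_idx2: "(\<Sum>I<a*b. \<Sum>J<a*b. f I J) = (\<Sum>i<a. \<Sum>j<a. \<Sum>k<(b::nat). \<Sum>l<b. f (i*b+k) (j*b+l))"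
proof -
  have "(\<Sum>I<a*b. \<Sum>J<a*b. f I J) = (\<Sum>i<a. \<Sum>k<b. \<Sum>j<a. \<Sum>l<b. f (i*b+k) (j*b+l))"
    by (simp add: sum_idx)
  also have "\<dots> = (\<Sum>i<a. \<Sum>j<a. \<Sum>k<(b::nat). \<Sum>l<b. f (i*b+k) (j*b+l))"
  proof (rule sum.cong[OF refl])
    fix i show "(\<Sum>k<b. \<Sum>j<a. \<Sum>l<b. f (i*b+k) (j*b+l)) = (\<Sum>j<a. \<Sum>k<b. \<Sum>l<b. f (i*b+k) (j*b+l))"
      by (rule sum.swap)
  qed
  finally show ?thesis .
qed

primrec kerL :: "(complex mat \<Rightarrow> complex mat) \<Rightarrow> nat \<Rightarrow> nat \<Rightarrow> nat \<Rightarrow> nat \<Rightarrow> nat \<Rightarrow> nat \<Rightarrow> nat \<Rightarrow> complex" where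
  "kerL \<Lambda> d d' 0 I J B C = 1"
| "kerL \<Lambda> d d' (Suc n) I J B C = \<Lambda> (munit d (I div d^n) (J div d^n)) $$ (B div d'^n, C div d'^n)
     * kerL \<Lambda> d d' n (I mod d^n) (J mod d^n) (B mod d'^n) (C mod d'^n)"

lemma pow_kernel:
  assumes h\<Lambda>: "\<And>i j. i<d \<Longrightarrow> j<d \<Longrightarrow> \<Lambda> (munit d i j) \<in> carrier_mat d' d'"
  shows "Y \<in> carrier_mat (d^n) (d^n) \<Longrightarrow> tensor_pow \<Lambda> d d' n Y \<in> carrier_mat (d'^n) (d'^n) \<and>
    (\<forall>B<d'^n. \<forall>C<d'^n. tensor_pow \<Lambda> d d' n Y $$ (B,C) = (\<Sum>I<d^n. \<Sum>J<d^n. Y $$ (I,J) * kerL \<Lambda> d d' n I J B C))"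
proof (induction n arbitrary: Y)
  case 0
  then show ?case by auto
next
  case (Suc n)
  let ?N = "d^n" and ?N' = "d'^n"
  have h2: "\<And>k l. k < ?N \<Longrightarrow> l < ?N \<Longrightarrow> tensor_pow \<Lambda> d d' n (munit ?N k l) \<in> carrier_mat ?N' ?N'"
    using Suc.IH by simp
  have ent: "tensor_pow \<Lambda> d d' n (munit ?N k l) $$ (B,C) = kerL \<Lambda> d d' n k l B C"
    if "k < ?N" "l < ?N" "B < ?N'" "C < ?N'" for k l B C
  proof -
    have "tensor_pow \<Lambda> d d' n (munit ?N k l) $$ (B,C) = (\<Sum>I<?N. \<Sum>J<?N. (if I = k \<and> J = l then 1 else 0) * kerL \<Lambda> d d' n I J B C)"
      using Suc.IH[of "munit ?N k l"] that by (auto intro!: sum.cong)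
    also have "\<dots> = kerL \<Lambda> d d' n k l B C" by (rule sum2_delta[OF that(1,2)])
    finally show ?thesis .
  qed
  have car: "tensor_pow \<Lambda> d d' (Suc n) Y \<in> carrier_mat (d'^Suc n) (d'^Suc n)" by simp
  moreover have "tensor_pow \<Lambda> d d' (Suc n) Y $$ (B,C) = (\<Sum>I<d^Suc n. \<Sum>J<d^Suc n. Y $$ (I,J) * kerL \<Lambda> d d' (Suc n) I J B C)"
    if B: "B < d'^Suc n" and C: "C < d'^Suc n" for B C
  proof -
    have B': "B < d' * ?N'" and C': "C < d' * ?N'" using B C by simp_all
    have "tensor_pow \<Lambda> d d' (Suc n) Y $$ (B,C) = (\<Sum>i<d. \<Sum>j<d. \<Sum>k<?N. \<Sum>l<?N.
       Y $$ (i*?N+k, j*?N+l) * (\<Lambda> (munit d i j) $$ (B div ?N', C div ?N') * tensor_pow \<Lambda> d d' n (munit ?N k l) $$ (B mod ?N', C mod ?N')))"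
      apply (simp only: tensor_pow.simps)
      apply (rule tm_index)
      using h\<Lambda> h2 B' C' by auto
    also have "\<dots> = (\<Sum>i<d. \<Sum>j<d. \<Sum>k<?N. \<Sum>l<?N.
       Y $$ (i*?N+k, j*?N+l) * kerL \<Lambda> d d' (Suc n) (i*?N+k) (j*?N+l) B C)"
      using B' C' by (intro sum.cong refl) (simp add: ent mod_lt)
    also have "\<dots> = (\<Sum>I<d^Suc n. \<Sum>J<d^Suc n. Y $$ (I,J) * kerL \<Lambda> d d' (Suc n) I J B C)"
      by (simp only: power_Suc sum_idx2)
    finally show ?thesis .
  qed
  ultimately show ?case by blast
qed

lemma kerL_trace:
  assumes tp: "\<And>i j. i<d \<Longrightarrow> j<d \<Longrightarrow> (\<Sum>b<d'. \<Lambda> (munit d i j) $$ (b,b)) = (if i = j then 1 else 0)"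
  shows "I < d^n \<Longrightarrow> J < d^n \<Longrightarrow> (\<Sum>B<d'^n. kerL \<Lambda> d d' n I J B B) = (if I = J then 1 else 0)"
proof (induction n arbitrary: I J)
  case 0
  then show ?case by simp
next
  case (Suc n)
  let ?N = "d^n" and ?N' = "d'^n"
  have I: "I div ?N < d" "I mod ?N < ?N" and J: "J div ?N < d" "J mod ?N < ?N"
    using Suc.prems by (auto simp: div_lt mod_lt mult.commute)
  have "(\<Sum>B<d'^Suc n. kerL \<Lambda> d d' (Suc n) I J B B) = (\<Sum>b<d'. \<Sum>B<?N'. \<Lambda> (munit d (I div ?N) (J div ?N)) $$ (b,b) * kerL \<Lambda> d d' n (I mod ?N) (J mod ?N) B B)"
    by (simp only: power_Suc sum_idx) (intro sum.cong refl, simp)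
  also have "\<dots> = (\<Sum>b<d'. \<Lambda> (munit d (I div ?N) (J div ?N)) $$ (b,b)) * (\<Sum>B<?N'. kerL \<Lambda> d d' n (I mod ?N) (J mod ?N) B B)"
    by (simp add: sum_product)
  also have "\<dots> = (if I div ?N = J div ?N then 1 else 0) * (if I mod ?N = J mod ?N then 1 else 0)"
    using tp[OF I(1) J(1)] Suc.IH[OF I(2) J(2)] by simp
  also have "\<dots> = (if I = J then 1 else 0)"
  proof -
    have "(I = J) = (I div ?N = J div ?N \<and> I mod ?N = J mod ?N)" by (metis div_mult_mod_eq)
    then show ?thesis by simp
  qed
  finally show ?case .
qed

lemma choi_index:
  assumes h\<Lambda>: "\<And>i j. i<d \<Longrightarrow> j<d \<Longrightarrow> \<Lambda> (munit d i j) \<in> carrier_mat d' d'"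
    and r: "r < d*d'" and c: "c < d*d'"
  shows "choi d d' \<Lambda> $$ (r,c) = \<Lambda> (munit d (r div d') (c div d')) $$ (r mod d', c mod d') / of_nat d"
proof -
  have rd: "r div d' < d" and cd: "c div d' < d" using r c by (auto simp: div_lt)
  have "choi d d' \<Lambda> $$ (r,c) = (\<Sum>k<d. \<Sum>l<d. Pplus d $$ ((r div d')*d+k, (c div d')*d+l) * \<Lambda> (munit d k l) $$ (r mod d', c mod d'))"
    unfolding choi_def by (rule ti_index) (auto intro: h\<Lambda> simp: r c)
  also have "\<dots> = (\<Sum>k<d. \<Sum>l<d. (if k = r div d' \<and> l = c div d' then 1 else 0) * (\<Lambda> (munit d k l) $$ (r mod d', c mod d') / of_nat d))"
    using rd cd by (intro sum.cong refl) (auto simp: Pplus_index)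
  also have "\<dots> = \<Lambda> (munit d (r div d') (c div d')) $$ (r mod d', c mod d') / of_nat d"
    by (rule sum2_delta[OF rd cd])
  finally show ?thesis .
qed

definition lamT :: "complex mat \<Rightarrow> nat \<Rightarrow> nat \<Rightarrow> nat \<Rightarrow> nat \<Rightarrow> nat \<Rightarrow> nat \<Rightarrow> nat \<Rightarrow> nat \<Rightarrow> complex" where
  "lamT \<sigma> d d' i j b b' c c' = of_nat d * \<sigma> $$ ((i*d'+b)*d'+b', (j*d'+c)*d'+c')"

primrec kerT :: "complex mat \<Rightarrow> nat \<Rightarrow> nat \<Rightarrow> nat \<Rightarrow> nat \<Rightarrow> nat \<Rightarrow> nat \<Rightarrow> nat \<Rightarrow> nat \<Rightarrow> nat \<Rightarrow> complex" where
  "kerT \<sigma> d d' 0 I J B1 B1' B2 B2' = 1"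
| "kerT \<sigma> d d' (Suc n) I J B1 B1' B2 B2' =
     lamT \<sigma> d d' (I div d^n) (J div d^n) (B1 div d'^n) (B1' div d'^n) (B2 div d'^n) (B2' div d'^n)
     * kerT \<sigma> d d' n (I mod d^n) (J mod d^n) (B1 mod d'^n) (B1' mod d'^n) (B2 mod d'^n) (B2' mod d'^n)"

lemma kerT_marg:
  assumes hm: "\<And>i j b c. i<d \<Longrightarrow> j<d \<Longrightarrow> b<d' \<Longrightarrow> c<d' \<Longrightarrow> (\<Sum>e<d'. lamT \<sigma> d d' i j b e c e) = \<Lambda> (munit d i j) $$ (b,c)"
  shows "I < d^n \<Longrightarrow> J < d^n \<Longrightarrow> B1 < d'^n \<Longrightarrow> B2 < d'^n \<Longrightarrow>
    (\<Sum>B'<d'^n. kerT \<sigma> d d' n I J B1 B' B2 B') = kerL \<Lambda> d d' n I J B1 B2"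
proof (induction n arbitrary: I J B1 B2)
  case 0
  then show ?case by simp
next
  case (Suc n)
  let ?N = "d^n" and ?N' = "d'^n"
  have I: "I div ?N < d" "I mod ?N < ?N" and J: "J div ?N < d" "J mod ?N < ?N"
   and B1: "B1 div ?N' < d'" "B1 mod ?N' < ?N'" and B2: "B2 div ?N' < d'" "B2 mod ?N' < ?N'"
    using Suc.prems by (auto simp: div_lt mod_lt mult.commute)
  have "(\<Sum>B'<d'^Suc n. kerT \<sigma> d d' (Suc n) I J B1 B' B2 B') =
     (\<Sum>e<d'. \<Sum>B''<?N'. lamT \<sigma> d d' (I div ?N) (J div ?N) (B1 div ?N') e (B2 div ?N') e
        * kerT \<sigma> d d' n (I mod ?N) (J mod ?N) (B1 mod ?N') B'' (B2 mod ?N') B'')"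
    by (simp only: power_Suc sum_idx) (intro sum.cong refl, simp)
  also have "\<dots> = (\<Sum>e<d'. lamT \<sigma> d d' (I div ?N) (J div ?N) (B1 div ?N') e (B2 div ?N') e)
        * (\<Sum>B''<?N'. kerT \<sigma> d d' n (I mod ?N) (J mod ?N) (B1 mod ?N') B'' (B2 mod ?N') B'')"
    by (simp add: sum_product)
  also have "\<dots> = kerL \<Lambda> d d' (Suc n) I J B1 B2"
    using hm[OF I(1) J(1) B1(1) B2(1)] Suc.IH[OF I(2) J(2) B1(2) B2(2)] by simp
  finally show ?case .
qed

lemma kerT_sym:
  assumes hs: "\<And>i j b b' c c'. i<d \<Longrightarrow> j<d \<Longrightarrow> b<d' \<Longrightarrow> b'<d' \<Longrightarrow> c<d' \<Longrightarrow> c'<d' \<Longrightarrow>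
     lamT \<sigma> d d' i j b b' c c' = lamT \<sigma> d d' i j b' b c' c"
  shows "I < d^n \<Longrightarrow> J < d^n \<Longrightarrow> B1 < d'^n \<Longrightarrow> B1' < d'^n \<Longrightarrow> B2 < d'^n \<Longrightarrow> B2' < d'^n \<Longrightarrow>
    kerT \<sigma> d d' n I J B1 B1' B2 B2' = kerT \<sigma> d d' n I J B1' B1 B2' B2"
proof (induction n arbitrary: I J B1 B1' B2 B2')
  case 0
  then show ?case by simp
next
  case (Suc n)
  let ?N = "d^n" and ?N' = "d'^n"
  have I: "I div ?N < d" "I mod ?N < ?N" and J: "J div ?N < d" "J mod ?N < ?N"
   and B1: "B1 div ?N' < d'" "B1 mod ?N' < ?N'" and B2: "B2 div ?N' < d'" "B2 mod ?N' < ?N'"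
   and B1': "B1' div ?N' < d'" "B1' mod ?N' < ?N'" and B2': "B2' div ?N' < d'" "B2' mod ?N' < ?N'"
    using Suc.prems by (auto simp: div_lt mod_lt mult.commute)
  show ?case
    using hs[OF I(1) J(1) B1(1) B1'(1) B2(1) B2'(1)] Suc.IH[OF I(2) J(2) B1(2) B1'(2) B2(2) B2'(2)]
    by simp
qed

lemma kerT_gram:
  fixes D :: nat and g :: "nat \<Rightarrow> nat \<Rightarrow> complex"
  assumes g: "\<And>r c. r < d*d'*d' \<Longrightarrow> c < d*d'*d' \<Longrightarrow> \<sigma> $$ (r,c) = (\<Sum>m<D. g m r * cnj (g m c))"
  shows "\<exists>(M::nat) G. \<forall>I J B1 B1' B2 B2'. I < d^n \<longrightarrow> J < d^n \<longrightarrow> B1 < d'^n \<longrightarrow> B1' < d'^n \<longrightarrow> B2 < d'^n \<longrightarrow> B2' < d'^n \<longrightarrow>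
    kerT \<sigma> d d' n I J B1 B1' B2 B2' = (\<Sum>m<M. G m I B1 B1' * cnj (G m J B2 B2'))"
proof (induction n)
  case 0
  have "kerT \<sigma> d d' 0 I J B1 B1' B2 B2' = (\<Sum>m<(1::nat). (\<lambda>m I B1 B1'. 1::complex) m I B1 B1' * cnj ((\<lambda>m I B1 B1'. 1::complex) m J B2 B2'))" for I J B1 B1' B2 B2'
    by simp
  then show ?case by (intro exI[of _ "1::nat"] exI[of _ "\<lambda>m I B1 B1'. 1::complex"]) blast
next
  case (Suc n)
  obtain M :: nat and G where G: "\<forall>I J B1 B1' B2 B2'. I < d^n \<longrightarrow> J < d^n \<longrightarrow> B1 < d'^n \<longrightarrow> B1' < d'^n \<longrightarrow> B2 < d'^n \<longrightarrow> B2' < d'^n \<longrightarrow>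
    kerT \<sigma> d d' n I J B1 B1' B2 B2' = (\<Sum>m<M. G m I B1 B1' * cnj (G m J B2 B2'))" using Suc.IH by blast
  let ?N = "d^n" and ?N' = "d'^n"
  define gT where "gT m i b b' = complex_of_real (sqrt (real d)) * g m ((i*d'+b)*d'+b')" for m i b b'
  have lamT_g: "lamT \<sigma> d d' i j b b' c c' = (\<Sum>m<D. gT m i b b' * cnj (gT m j c c'))"
    if "i<d" "j<d" "b<d'" "b'<d'" "c<d'" "c'<d'" for i j b b' c c'
  proof -
    have r: "(i*d'+b)*d'+b' < d*d'*d'" using that by (intro idx_lt) auto
    have c: "(j*d'+c)*d'+c' < d*d'*d'" using that by (intro idx_lt) auto
    have sq: "complex_of_real (sqrt (real d)) * cnj (complex_of_real (sqrt (real d))) = of_nat d"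
      by (simp flip: of_real_mult)
    have "lamT \<sigma> d d' i j b b' c c' = of_nat d * (\<Sum>m<D. g m ((i*d'+b)*d'+b') * cnj (g m ((j*d'+c)*d'+c')))"
      unfolding lamT_def using g[OF r c] by simp
    also have "\<dots> = (\<Sum>m<D. gT m i b b' * cnj (gT m j c c'))"
      unfolding gT_def sum_distrib_left using sq by (intro sum.cong refl) (simp add: algebra_simps)
    finally show ?thesis .
  qed
  define G' where "G' m I B1 B1' = gT (m div M) (I div ?N) (B1 div ?N') (B1' div ?N') * G (m mod M) (I mod ?N) (B1 mod ?N') (B1' mod ?N')" for m I B1 B1'
  have "kerT \<sigma> d d' (Suc n) I J B1 B1' B2 B2' = (\<Sum>m<D*M. G' m I B1 B1' * cnj (G' m J B2 B2'))"
    if "I < d^Suc n" "J < d^Suc n" "B1 < d'^Suc n" "B1' < d'^Suc n" "B2 < d'^Suc n" "B2' < d'^Suc n" for I J B1 B1' B2 B2'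
  proof -
    have I: "I div ?N < d" "I mod ?N < ?N" and J: "J div ?N < d" "J mod ?N < ?N"
     and B1: "B1 div ?N' < d'" "B1 mod ?N' < ?N'" and B2: "B2 div ?N' < d'" "B2 mod ?N' < ?N'"
     and B1': "B1' div ?N' < d'" "B1' mod ?N' < ?N'" and B2': "B2' div ?N' < d'" "B2' mod ?N' < ?N'"
      using that by (auto simp: div_lt mod_lt mult.commute)
    have "(\<Sum>m<D*M. G' m I B1 B1' * cnj (G' m J B2 B2')) =
       (\<Sum>m1<D. \<Sum>m2<M. (gT m1 (I div ?N) (B1 div ?N') (B1' div ?N') * cnj (gT m1 (J div ?N) (B2 div ?N') (B2' div ?N')))
          * (G m2 (I mod ?N) (B1 mod ?N') (B1' mod ?N') * cnj (G m2 (J mod ?N) (B2 mod ?N') (B2' mod ?N'))))"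
      unfolding sum_idx G'_def by (intro sum.cong refl) (simp add: algebra_simps)
    also have "\<dots> = (\<Sum>m1<D. gT m1 (I div ?N) (B1 div ?N') (B1' div ?N') * cnj (gT m1 (J div ?N) (B2 div ?N') (B2' div ?N')))
          * (\<Sum>m2<M. G m2 (I mod ?N) (B1 mod ?N') (B1' mod ?N') * cnj (G m2 (J mod ?N) (B2 mod ?N') (B2' mod ?N')))"
      by (simp add: sum_product)
    also have "\<dots> = kerT \<sigma> d d' (Suc n) I J B1 B1' B2 B2'"
      using lamT_g[OF I(1) J(1) B1(1) B1'(1) B2(1) B2'(1)] G I J B1 B2 B1' B2' by simp
    finally show ?thesis by simp
  qed
  then show ?case by blast
qed

lemma sum_pair: "(\<Sum>m\<in>M. \<Sum>k\<in>K. F m k) = (\<Sum>p\<in>M\<times>K. F (fst p) (snd p))"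
  by (simp add: sum.cartesian_product case_prod_beta)

lemma link_gram:
  fixes A :: "'r \<Rightarrow> 's \<Rightarrow> 'r \<Rightarrow> 's \<Rightarrow> complex" and B :: "'s \<Rightarrow> 'q \<Rightarrow> 's \<Rightarrow> 'q \<Rightarrow> complex"
    and a :: "'m \<Rightarrow> 'r \<Rightarrow> 's \<Rightarrow> complex" and b :: "'k \<Rightarrow> 's \<Rightarrow> 'q \<Rightarrow> complex"
  assumes hA: "\<And>r s c t. r\<in>R \<Longrightarrow> s\<in>S \<Longrightarrow> c\<in>R \<Longrightarrow> t\<in>S \<Longrightarrow> A r s c t = (\<Sum>m\<in>M. a m r s * cnj (a m c t))"
    and hB: "\<And>s r' t c'. s\<in>S \<Longrightarrow> r'\<in>Q \<Longrightarrow> t\<in>S \<Longrightarrow> c'\<in>Q \<Longrightarrow> B s r' t c' = (\<Sum>k\<in>K. b k s r' * cnj (b k t c'))"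
    and r: "r\<in>R" and c: "c\<in>R" and r': "r'\<in>Q" and c': "c'\<in>Q"
  shows "(\<Sum>s\<in>S. \<Sum>t\<in>S. A r s c t * B s r' t c') =
     (\<Sum>p\<in>M\<times>K. (\<Sum>s\<in>S. a (fst p) r s * b (snd p) s r') * cnj (\<Sum>t\<in>S. a (fst p) c t * b (snd p) t c'))"
proof -
  have "(\<Sum>s\<in>S. \<Sum>t\<in>S. A r s c t * B s r' t c') =
     (\<Sum>s\<in>S. \<Sum>t\<in>S. \<Sum>m\<in>M. \<Sum>k\<in>K. (a m r s * b k s r') * cnj (a m c t * b k t c'))"
  proof (intro sum.cong refl)
    fix s t assume s: "s \<in> S" and t: "t \<in> S"
    show "A r s c t * B s r' t c' = (\<Sum>m\<in>M. \<Sum>k\<in>K. (a m r s * b k s r') * cnj (a m c t * b k t c'))"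
      unfolding hA[OF r s c t] hB[OF s r' t c'] sum_product by (intro sum.cong refl) (simp add: algebra_simps)
  qed
  also have "\<dots> = (\<Sum>m\<in>M. \<Sum>k\<in>K. \<Sum>s\<in>S. \<Sum>t\<in>S. (a m r s * b k s r') * cnj (a m c t * b k t c'))"
  proof -
    have "(\<Sum>s\<in>S. \<Sum>t\<in>S. \<Sum>m\<in>M. \<Sum>k\<in>K. (a m r s * b k s r') * cnj (a m c t * b k t c')) =
          (\<Sum>s\<in>S. \<Sum>m\<in>M. \<Sum>k\<in>K. \<Sum>t\<in>S. (a m r s * b k s r') * cnj (a m c t * b k t c'))"
    proof (rule sum.cong[OF refl])
      fix s
      have "(\<Sum>t\<in>S. \<Sum>m\<in>M. \<Sum>k\<in>K. (a m r s * b k s r') * cnj (a m c t * b k t c')) =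
            (\<Sum>m\<in>M. \<Sum>t\<in>S. \<Sum>k\<in>K. (a m r s * b k s r') * cnj (a m c t * b k t c'))"
        by (rule sum.swap)
      also have "\<dots> = (\<Sum>m\<in>M. \<Sum>k\<in>K. \<Sum>t\<in>S. (a m r s * b k s r') * cnj (a m c t * b k t c'))"
        by (rule sum.cong[OF refl]) (rule sum.swap)
      finally show "(\<Sum>t\<in>S. \<Sum>m\<in>M. \<Sum>k\<in>K. (a m r s * b k s r') * cnj (a m c t * b k t c')) =
            (\<Sum>m\<in>M. \<Sum>k\<in>K. \<Sum>t\<in>S. (a m r s * b k s r') * cnj (a m c t * b k t c'))" .
    qed
    also have "\<dots> = (\<Sum>m\<in>M. \<Sum>s\<in>S. \<Sum>k\<in>K. \<Sum>t\<in>S. (a m r s * b k s r') * cnj (a m c t * b k t c'))"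
      by (rule sum.swap)
    also have "\<dots> = (\<Sum>m\<in>M. \<Sum>k\<in>K. \<Sum>s\<in>S. \<Sum>t\<in>S. (a m r s * b k s r') * cnj (a m c t * b k t c'))"
      by (rule sum.cong[OF refl]) (rule sum.swap)
    finally show ?thesis .
  qed
  also have "\<dots> = (\<Sum>p\<in>M\<times>K. \<Sum>s\<in>S. \<Sum>t\<in>S. (a (fst p) r s * b (snd p) s r') * cnj (a (fst p) c t * b (snd p) t c'))"
    by (rule sum_pair)
  also have "\<dots> = (\<Sum>p\<in>M\<times>K. (\<Sum>s\<in>S. a (fst p) r s * b (snd p) s r') * cnj (\<Sum>t\<in>S. a (fst p) c t * b (snd p) t c'))"
    by (simp add: sum_product cnj_sum)
  finally show ?thesis .
qed

lemma mtrace_munit: "i < d \<Longrightarrow> j < d \<Longrightarrow> mtrace (munit d i j) = (if i = j then 1 else 0)"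
proof -
  assume ij: "i < d" "j < d"
  have "mtrace (munit d i j) = (\<Sum>k<d. if k = i then (if i = j then 1 else 0) else 0)"
    unfolding mtrace_def using ij by (intro sum.cong) auto
  then show ?thesis using ij by simp
qed

lemma choi_gram_cp:
  assumes cp: "cp_map din dout \<Phi>"
  shows "\<exists>g. \<forall>a a' I J. a < din \<longrightarrow> a' < din \<longrightarrow> I < dout \<longrightarrow> J < dout \<longrightarrow>
     \<Phi> (munit din a a') $$ (I,J) = (\<Sum>m<din*dout. g m (a*dout+I) * cnj (g m (a'*dout+J)))"
proof -
  obtain g where g: "\<forall>r<din*dout. \<forall>c<din*dout. \<Phi> (munit din (r div dout) (c div dout)) $$ (r mod dout, c mod dout)
     = (\<Sum>m<din*dout. g m r * cnj (g m c))"
    using gram[OF cp_choi_pf[OF cp]] by blast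
  have "\<Phi> (munit din a a') $$ (I,J) = (\<Sum>m<din*dout. g m (a*dout+I) * cnj (g m (a'*dout+J)))"
    if "a < din" "a' < din" "I < dout" "J < dout" for a a' I J
    using g[rule_format, of "a*dout+I" "a'*dout+J"] that by (simp add: idx_lt)
  then show ?thesis by blast
qed

lemma swap3: "(\<Sum>x\<in>A. \<Sum>y\<in>B. \<Sum>z\<in>C. f x y z) = (\<Sum>y\<in>B. \<Sum>z\<in>C. \<Sum>x\<in>A. f x y z)"
proof -
  have "(\<Sum>x\<in>A. \<Sum>y\<in>B. \<Sum>z\<in>C. f x y z) = (\<Sum>y\<in>B. \<Sum>x\<in>A. \<Sum>z\<in>C. f x y z)" by (rule sum.swap)
  also have "\<dots> = (\<Sum>y\<in>B. \<Sum>z\<in>C. \<Sum>x\<in>A. f x y z)" by (rule sum.cong[OF refl]) (rule sum.swap)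
  finally show ?thesis .
qed

lemma swap3': "(\<Sum>x\<in>A. \<Sum>y\<in>B. \<Sum>z\<in>C. f x y z) = (\<Sum>z\<in>C. \<Sum>x\<in>A. \<Sum>y\<in>B. f x y z)"
proof -
  have "(\<Sum>x\<in>A. \<Sum>y\<in>B. \<Sum>z\<in>C. f x y z) = (\<Sum>x\<in>A. \<Sum>z\<in>C. \<Sum>y\<in>B. f x y z)"
    by (rule sum.cong[OF refl]) (rule sum.swap)
  also have "\<dots> = (\<Sum>z\<in>C. \<Sum>x\<in>A. \<Sum>y\<in>B. f x y z)" by (rule sum.swap)
  finally show ?thesis .
qed

lemma sum_delta_mult: "(b::nat) < n \<Longrightarrow> (\<Sum>x<n. f x * (if b = x then 1 else (0::complex))) = f b"
proof -
  assume "b < n"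
  have "(\<Sum>x<n. f x * (if b = x then 1 else (0::complex))) = (\<Sum>x<n. if x = b then f x else 0)"
    by (intro sum.cong) auto
  then show ?thesis using \<open>b < n\<close> by simp
qed

lemma sum_delta_mult': "(b::nat) < n \<Longrightarrow> (\<Sum>x<n. f x * (if x = b then 1 else (0::complex))) = f b"
proof -
  assume "b < n"
  have "(\<Sum>x<n. f x * (if x = b then 1 else (0::complex))) = (\<Sum>x<n. if x = b then f x else 0)"
    by (intro sum.cong) auto
  then show ?thesis using \<open>b < n\<close> by simp
qed

lemma branch:
  fixes \<Lambda> E D :: "complex mat \<Rightarrow> complex mat" and \<sigma> :: "complex mat"
    and MG :: nat and G :: "nat \<Rightarrow> nat \<Rightarrow> nat \<Rightarrow> nat \<Rightarrow> complex"
  assumes h\<Lambda>: "\<And>i j. i<d \<Longrightarrow> j<d \<Longrightarrow> \<Lambda> (munit d i j) \<in> carrier_mat d' d'"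
    and hm: "\<And>i j b c. i<d \<Longrightarrow> j<d \<Longrightarrow> b<d' \<Longrightarrow> c<d' \<Longrightarrow> (\<Sum>e<d'. lamT \<sigma> d d' i j b e c e) = \<Lambda> (munit d i j) $$ (b,c)"
    and hs: "\<And>i j b b' c c'. i<d \<Longrightarrow> j<d \<Longrightarrow> b<d' \<Longrightarrow> b'<d' \<Longrightarrow> c<d' \<Longrightarrow> c'<d' \<Longrightarrow>
     lamT \<sigma> d d' i j b b' c c' = lamT \<sigma> d d' i j b' b c' c"
    and hG: "\<forall>I J B1 B1' B2 B2'. I < d^n \<longrightarrow> J < d^n \<longrightarrow> B1 < d'^n \<longrightarrow> B1' < d'^n \<longrightarrow> B2 < d'^n \<longrightarrow> B2' < d'^n \<longrightarrow>
    kerT \<sigma> d d' n I J B1 B1' B2 B2' = (\<Sum>m<MG. G m I B1 B1' * cnj (G m J B2 B2'))"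
    and E: "cp_map K (d^n) E" and D: "channel (d'^n) K D"
  shows "\<exists>(w :: (((nat\<times>nat)\<times>nat)\<times>nat) \<Rightarrow> nat \<Rightarrow> nat \<Rightarrow> nat \<Rightarrow> complex) W.
   (\<forall>a a' y z. a<K \<longrightarrow> a'<K \<longrightarrow> y<K \<longrightarrow> z<K \<longrightarrow>
      D (tensor_pow \<Lambda> d d' n (E (munit K a a'))) $$ (y,z) = (\<Sum>y'<K. \<Sum>\<mu>\<in>W. w \<mu> a y y' * cnj (w \<mu> a' z y'))) \<and>
   (\<forall>a a' y' z'. a<K \<longrightarrow> a'<K \<longrightarrow> y'<K \<longrightarrow> z'<K \<longrightarrow>
      D (tensor_pow \<Lambda> d d' n (E (munit K a a'))) $$ (y',z') = (\<Sum>y<K. \<Sum>\<mu>\<in>W. w \<mu> a y y' * cnj (w \<mu> a' y z')))"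
proof -
  define N where "N = d^n"
  define N' where "N' = d'^n"
  have Dcp: "cp_map N' K D" using D unfolding channel_def N'_def by simp
  obtain ge where ge: "\<forall>a a' I J. a < K \<longrightarrow> a' < K \<longrightarrow> I < N \<longrightarrow> J < N \<longrightarrow>
     E (munit K a a') $$ (I,J) = (\<Sum>m<K*N. ge m (a*N+I) * cnj (ge m (a'*N+J)))"
    using choi_gram_cp[OF E] unfolding N_def by blast
  obtain gd where gd: "\<forall>a a' I J. a < N' \<longrightarrow> a' < N' \<longrightarrow> I < K \<longrightarrow> J < K \<longrightarrow>
     D (munit N' a a') $$ (I,J) = (\<Sum>m<N'*K. gd m (a*K+I) * cnj (gd m (a'*K+J)))"
    using choi_gram_cp[OF Dcp] by blast
  define eE where "eE a a' I J = E (munit K a a') $$ (I,J)" for a a' I J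
  define dD where "dD B1 B2 y z = D (munit N' B1 B2) $$ (y,z)" for B1 B2 y z
  define T1 where "T1 a B1 B1' a' B2 B2' = (\<Sum>I<N. \<Sum>J<N. eE a a' I J * kerT \<sigma> d d' n I J B1 B1' B2 B2')" for a B1 B1' a' B2 B2'
  define T2 where "T2 a y B1' a' z B2' = (\<Sum>B1<N'. \<Sum>B2<N'. T1 a B1 B1' a' B2 B2' * dD B1 B2 y z)" for a y B1' a' z B2'
  define Qf where "Qf a y y' a' z z' = (\<Sum>B1'<N'. \<Sum>B2'<N'. T2 a y B1' a' z B2' * dD B1' B2' y' z')" for a y y' a' z z'
  define w1 where "w1 p a B1 B1' = (\<Sum>I<N. ge (fst p) (a*N+I) * G (snd p) I B1 B1')" for p :: "nat \<times> nat" and a B1 B1'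
  define w2 where "w2 p a B1' y = (\<Sum>B1<N'. w1 (fst p) a B1 B1' * gd (snd p) (B1*K+y))" for p :: "(nat \<times> nat) \<times> nat" and a B1' y
  define w3 where "w3 p a y y' = (\<Sum>B1'<N'. w2 (fst p) a B1' y * gd (snd p) (B1'*K+y'))" for p :: "((nat \<times> nat) \<times> nat) \<times> nat" and a y y'
  define W1 where "W1 = {..<K*N} \<times> {..<MG}"
  define W2 where "W2 = W1 \<times> {..<N'*K}"
  define W3 where "W3 = W2 \<times> {..<N'*K}"
  have g1: "T1 a B1 B1' a' B2 B2' = (\<Sum>p\<in>W1. w1 p a B1 B1' * cnj (w1 p a' B2 B2'))"
    if "a < K" "a' < K" "B1 < N'" "B1' < N'" "B2 < N'" "B2' < N'" for a a' B1 B1' B2 B2'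
  proof -
    have "(\<Sum>I\<in>{..<N}. \<Sum>J\<in>{..<N}. eE a a' I J * kerT \<sigma> d d' n I J (fst (B1,B1')) (snd (B1,B1')) (fst (B2,B2')) (snd (B2,B2'))) =
      (\<Sum>p\<in>{..<K*N}\<times>{..<MG}. (\<Sum>I\<in>{..<N}. ge (fst p) (a*N+I) * G (snd p) I (fst (B1,B1')) (snd (B1,B1'))) *
          cnj (\<Sum>J\<in>{..<N}. ge (fst p) (a'*N+J) * G (snd p) J (fst (B2,B2')) (snd (B2,B2'))))"
    proof (rule link_gram[where R="{..<K}" and Q="{..<N'}\<times>{..<N'}" and A="\<lambda>a I a' J. eE a a' I J"
        and B="\<lambda>I q J q'. kerT \<sigma> d d' n I J (fst q) (snd q) (fst q') (snd q')"])
      show "eE r c s t = (\<Sum>m\<in>{..<K*N}. ge m (r*N+s) * cnj (ge m (c*N+t)))"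
        if "r \<in> {..<K}" "s \<in> {..<N}" "c \<in> {..<K}" "t \<in> {..<N}" for r s c t
        using ge that unfolding eE_def by simp
      show "kerT \<sigma> d d' n s t (fst r') (snd r') (fst c') (snd c') = (\<Sum>k\<in>{..<MG}. G k s (fst r') (snd r') * cnj (G k t (fst c') (snd c')))"
        if "s \<in> {..<N}" "r' \<in> {..<N'}\<times>{..<N'}" "t \<in> {..<N}" "c' \<in> {..<N'}\<times>{..<N'}" for s r' t c'
        using hG that unfolding N_def N'_def by auto
    qed (use that in auto)
    then show ?thesis unfolding T1_def w1_def W1_def by simp
  qed
  have g2: "T2 a y B1' a' z B2' = (\<Sum>p\<in>W2. w2 p a B1' y * cnj (w2 p a' B2' z))"
    if "a < K" "a' < K" "y < K" "z < K" "B1' < N'" "B2' < N'" for a a' y z B1' B2'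
  proof -
    have "(\<Sum>B1\<in>{..<N'}. \<Sum>B2\<in>{..<N'}. T1 (fst (a,B1')) B1 (snd (a,B1')) (fst (a',B2')) B2 (snd (a',B2')) * dD B1 B2 y z) =
      (\<Sum>p\<in>W1\<times>{..<N'*K}. (\<Sum>B1\<in>{..<N'}. w1 (fst p) (fst (a,B1')) B1 (snd (a,B1')) * gd (snd p) (B1*K+y)) *
          cnj (\<Sum>B2\<in>{..<N'}. w1 (fst p) (fst (a',B2')) B2 (snd (a',B2')) * gd (snd p) (B2*K+z)))"
    proof (rule link_gram[where R="{..<K}\<times>{..<N'}" and Q="{..<K}" and A="\<lambda>r B1 c B2. T1 (fst r) B1 (snd r) (fst c) B2 (snd c)"
        and B="\<lambda>B1 y B2 z. dD B1 B2 y z"])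
      show "T1 (fst r) s (snd r) (fst c) t (snd c) = (\<Sum>m\<in>W1. w1 m (fst r) s (snd r) * cnj (w1 m (fst c) t (snd c)))"
        if "r \<in> {..<K}\<times>{..<N'}" "s \<in> {..<N'}" "c \<in> {..<K}\<times>{..<N'}" "t \<in> {..<N'}" for r s c t
        using g1 that by auto
      show "dD s t r' c' = (\<Sum>k\<in>{..<N'*K}. gd k (s*K+r') * cnj (gd k (t*K+c')))"
        if "s \<in> {..<N'}" "r' \<in> {..<K}" "t \<in> {..<N'}" "c' \<in> {..<K}" for s r' t c'
        using gd that unfolding dD_def by auto
    qed (use that in auto)
    then show ?thesis unfolding T2_def w2_def W2_def by simp
  qed
  have g3: "Qf a y y' a' z z' = (\<Sum>p\<in>W3. w3 p a y y' * cnj (w3 p a' z z'))"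
    if "a < K" "a' < K" "y < K" "z < K" "y' < K" "z' < K" for a a' y z y' z'
  proof -
    have "(\<Sum>B1'\<in>{..<N'}. \<Sum>B2'\<in>{..<N'}. T2 (fst (a,y)) (snd (a,y)) B1' (fst (a',z)) (snd (a',z)) B2' * dD B1' B2' y' z') =
      (\<Sum>p\<in>W2\<times>{..<N'*K}. (\<Sum>B1'\<in>{..<N'}. w2 (fst p) (fst (a,y)) B1' (snd (a,y)) * gd (snd p) (B1'*K+y')) *
          cnj (\<Sum>B2'\<in>{..<N'}. w2 (fst p) (fst (a',z)) B2' (snd (a',z)) * gd (snd p) (B2'*K+z')))"
    proof (rule link_gram[where R="{..<K}\<times>{..<K}" and Q="{..<K}" and A="\<lambda>r B1' c B2'. T2 (fst r) (snd r) B1' (fst c) (snd c) B2'"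
        and B="\<lambda>B1 y B2 z. dD B1 B2 y z"])
      show "T2 (fst r) (snd r) s (fst c) (snd c) t = (\<Sum>m\<in>W2. w2 m (fst r) s (snd r) * cnj (w2 m (fst c) t (snd c)))"
        if "r \<in> {..<K}\<times>{..<K}" "s \<in> {..<N'}" "c \<in> {..<K}\<times>{..<K}" "t \<in> {..<N'}" for r s c t
        using g2 that by auto
      show "dD s t r' c' = (\<Sum>k\<in>{..<N'*K}. gd k (s*K+r') * cnj (gd k (t*K+c')))"
        if "s \<in> {..<N'}" "r' \<in> {..<K}" "t \<in> {..<N'}" "c' \<in> {..<K}" for s r' t c'
        using gd that unfolding dD_def by auto
    qed (use that in auto)
    then show ?thesis unfolding Qf_def w3_def W3_def by simp
  qed
  have trD: "(\<Sum>y<K. dD B1 B2 y y) = (if B1 = B2 then 1 else 0)" if "B1 < N'" "B2 < N'" for B1 B2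
  proof -
    have "D (munit N' B1 B2) \<in> carrier_mat K K" using Dcp unfolding cp_map_def by simp
    then have "mtrace (D (munit N' B1 B2)) = (\<Sum>y<K. dD B1 B2 y y)" unfolding mtrace_def dD_def by simp
    moreover have "mtrace (D (munit N' B1 B2)) = mtrace (munit N' B1 B2)"
      using D unfolding channel_def tp_map_def N'_def by simp
    ultimately show ?thesis using mtrace_munit[OF that] by simp
  qed
  have Ecar: "E (munit K a a') \<in> carrier_mat N N" if "a < K" "a' < K" for a a'
    using E unfolding cp_map_def N_def by simp
  have Pcar: "tensor_pow \<Lambda> d d' n (E (munit K a a')) \<in> carrier_mat N' N'" if "a < K" "a' < K" for a a'
    using pow_kernel[where \<Lambda>=\<Lambda> and d=d and d'=d', OF h\<Lambda> Ecar[OF that, unfolded N_def]] unfolding N'_def by simp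
  have Pexp: "tensor_pow \<Lambda> d d' n (E (munit K a a')) $$ (B1,B2) = (\<Sum>I<N. \<Sum>J<N. eE a a' I J * kerL \<Lambda> d d' n I J B1 B2)"
    if "a < K" "a' < K" "B1 < N'" "B2 < N'" for a a' B1 B2
    using pow_kernel[where \<Lambda>=\<Lambda> and d=d and d'=d', OF h\<Lambda> Ecar[OF that(1,2), unfolded N_def]] that unfolding N'_def N_def eE_def by simp
  have Psi: "D (tensor_pow \<Lambda> d d' n (E (munit K a a'))) $$ (y,z) =
      (\<Sum>B1<N'. \<Sum>B2<N'. tensor_pow \<Lambda> d d' n (E (munit K a a')) $$ (B1,B2) * dD B1 B2 y z)"
    if "a < K" "a' < K" "y < K" "z < K" for a a' y z
    unfolding dD_def
    by (rule lin_expand[OF _ _ Pcar[OF that(1,2)] that(3,4)]) (use Dcp in \<open>auto simp: cp_map_def\<close>)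
  have marg: "(\<Sum>B'<N'. kerT \<sigma> d d' n I J B1 B' B2 B') = kerL \<Lambda> d d' n I J B1 B2"
    if "I < N" "J < N" "B1 < N'" "B2 < N'" for I J B1 B2
    using kerT_marg[OF hm] that unfolding N_def N'_def by blast
  have smarg: "(\<Sum>B<N'. kerT \<sigma> d d' n I J B B1' B B2') = kerL \<Lambda> d d' n I J B1' B2'"
    if "I < N" "J < N" "B1' < N'" "B2' < N'" for I J B1' B2'
  proof -
    have "(\<Sum>B<N'. kerT \<sigma> d d' n I J B B1' B B2') = (\<Sum>B<N'. kerT \<sigma> d d' n I J B1' B B2' B)"
      using kerT_sym[OF hs] that unfolding N_def N'_def by (intro sum.cong) auto
    then show ?thesis using marg that by simp
  qed
  have P_T1: "tensor_pow \<Lambda> d d' n (E (munit K a a')) $$ (B1,B2) = (\<Sum>B1'<N'. T1 a B1 B1' a' B2 B1')"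
    if "a < K" "a' < K" "B1 < N'" "B2 < N'" for a a' B1 B2
  proof -
    have "tensor_pow \<Lambda> d d' n (E (munit K a a')) $$ (B1,B2) = (\<Sum>I<N. \<Sum>J<N. eE a a' I J * (\<Sum>B'<N'. kerT \<sigma> d d' n I J B1 B' B2 B'))"
      unfolding Pexp[OF that] using that by (intro sum.cong refl) (simp add: marg)
    also have "\<dots> = (\<Sum>I<N. \<Sum>J<N. \<Sum>B'<N'. eE a a' I J * kerT \<sigma> d d' n I J B1 B' B2 B')"
      by (simp add: sum_distrib_left)
    also have "\<dots> = (\<Sum>B'<N'. \<Sum>I<N. \<Sum>J<N. eE a a' I J * kerT \<sigma> d d' n I J B1 B' B2 B')"
      by (rule swap3')
    finally show ?thesis unfolding T1_def .
  qed
  have P_T1': "tensor_pow \<Lambda> d d' n (E (munit K a a')) $$ (B1',B2') = (\<Sum>B1<N'. T1 a B1 B1' a' B1 B2')"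
    if "a < K" "a' < K" "B1' < N'" "B2' < N'" for a a' B1' B2'
  proof -
    have "tensor_pow \<Lambda> d d' n (E (munit K a a')) $$ (B1',B2') = (\<Sum>I<N. \<Sum>J<N. eE a a' I J * (\<Sum>B<N'. kerT \<sigma> d d' n I J B B1' B B2'))"
      unfolding Pexp[OF that] using that by (intro sum.cong refl) (simp add: smarg)
    also have "\<dots> = (\<Sum>I<N. \<Sum>J<N. \<Sum>B<N'. eE a a' I J * kerT \<sigma> d d' n I J B B1' B B2')"
      by (simp add: sum_distrib_left)
    also have "\<dots> = (\<Sum>B<N'. \<Sum>I<N. \<Sum>J<N. eE a a' I J * kerT \<sigma> d d' n I J B B1' B B2')"
      by (rule swap3')
    finally show ?thesis unfolding T1_def .
  qed
  have partA: "D (tensor_pow \<Lambda> d d' n (E (munit K a a'))) $$ (y,z) = (\<Sum>y'<K. Qf a y y' a' z y')"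
    if "a < K" "a' < K" "y < K" "z < K" for a a' y z
  proof -
    have "D (tensor_pow \<Lambda> d d' n (E (munit K a a'))) $$ (y,z) = (\<Sum>B1<N'. \<Sum>B2<N'. (\<Sum>B1'<N'. T1 a B1 B1' a' B2 B1') * dD B1 B2 y z)"
      unfolding Psi[OF that] using that by (intro sum.cong refl) (simp add: P_T1)
    also have "\<dots> = (\<Sum>B1<N'. \<Sum>B2<N'. \<Sum>B1'<N'. T1 a B1 B1' a' B2 B1' * dD B1 B2 y z)"
      by (simp add: sum_distrib_right)
    also have "\<dots> = (\<Sum>B1'<N'. T2 a y B1' a' z B1')"
      unfolding T2_def by (rule swap3')
    also have "\<dots> = (\<Sum>B1'<N'. \<Sum>B2'<N'. T2 a y B1' a' z B2' * (if B1' = B2' then 1 else 0))"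
      by (intro sum.cong refl) (simp add: sum_delta_mult)
    also have "\<dots> = (\<Sum>B1'<N'. \<Sum>B2'<N'. T2 a y B1' a' z B2' * (\<Sum>y'<K. dD B1' B2' y' y'))"
      by (intro sum.cong refl) (simp add: trD)
    also have "\<dots> = (\<Sum>B1'<N'. \<Sum>B2'<N'. \<Sum>y'<K. T2 a y B1' a' z B2' * dD B1' B2' y' y')"
      by (simp add: sum_distrib_left)
    also have "\<dots> = (\<Sum>y'<K. Qf a y y' a' z y')"
      unfolding Qf_def by (rule swap3')
    finally show ?thesis .
  qed
  have partB: "D (tensor_pow \<Lambda> d d' n (E (munit K a a'))) $$ (y',z') = (\<Sum>y<K. Qf a y y' a' y z')"
    if "a < K" "a' < K" "y' < K" "z' < K" for a a' y' z'
  proof -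
    have tr2: "(\<Sum>y<K. T2 a y B1' a' y B2') = tensor_pow \<Lambda> d d' n (E (munit K a a')) $$ (B1',B2')"
      if "B1' < N'" "B2' < N'" for B1' B2'
    proof -
      have "(\<Sum>y<K. T2 a y B1' a' y B2') = (\<Sum>B1<N'. \<Sum>B2<N'. \<Sum>y<K. T1 a B1 B1' a' B2 B2' * dD B1 B2 y y)"
        unfolding T2_def by (rule swap3)
      also have "\<dots> = (\<Sum>B1<N'. \<Sum>B2<N'. T1 a B1 B1' a' B2 B2' * (if B1 = B2 then 1 else 0))"
        by (intro sum.cong refl) (simp add: trD flip: sum_distrib_left)
      also have "\<dots> = (\<Sum>B1<N'. T1 a B1 B1' a' B1 B2')"
        by (intro sum.cong refl) (simp add: sum_delta_mult)
      also have "\<dots> = tensor_pow \<Lambda> d d' n (E (munit K a a')) $$ (B1',B2')"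
        using P_T1'[OF \<open>a < K\<close> \<open>a' < K\<close> that] by simp
      finally show ?thesis .
    qed
    have "(\<Sum>y<K. Qf a y y' a' y z') = (\<Sum>B1'<N'. \<Sum>B2'<N'. \<Sum>y<K. T2 a y B1' a' y B2' * dD B1' B2' y' z')"
      unfolding Qf_def by (rule swap3)
    also have "\<dots> = (\<Sum>B1'<N'. \<Sum>B2'<N'. (\<Sum>y<K. T2 a y B1' a' y B2') * dD B1' B2' y' z')"
      by (simp add: sum_distrib_right)
    also have "\<dots> = (\<Sum>B1'<N'. \<Sum>B2'<N'. tensor_pow \<Lambda> d d' n (E (munit K a a')) $$ (B1',B2') * dD B1' B2' y' z')"
      by (intro sum.cong refl) (simp add: tr2)
    also have "\<dots> = D (tensor_pow \<Lambda> d d' n (E (munit K a a'))) $$ (y',z')"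
      using Psi[OF that] by simp
    finally show ?thesis by simp
  qed
  show ?thesis
  proof (intro exI conjI allI impI)
    fix a a' y z assume "a < K" "a' < K" "y < K" "z < K"
    then show "D (tensor_pow \<Lambda> d d' n (E (munit K a a'))) $$ (y,z) = (\<Sum>y'<K. \<Sum>\<mu>\<in>W3. w3 \<mu> a y y' * cnj (w3 \<mu> a' z y'))"
      using partA g3 by simp
  next
    fix a a' y' z' assume "a < K" "a' < K" "y' < K" "z' < K"
    then show "D (tensor_pow \<Lambda> d d' n (E (munit K a a'))) $$ (y',z') = (\<Sum>y<K. \<Sum>\<mu>\<in>W3. w3 \<mu> a y y' * cnj (w3 \<mu> a' y z'))"
      using partB g3 by simp
  qed
qed

lemma cs_real: fixes c :: "'a \<Rightarrow> real" assumes "finite S"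
  shows "(\<Sum>a\<in>S. c a)^2 \<le> real (card S) * (\<Sum>a\<in>S. (c a)^2)"
proof -
  have "0 \<le> (\<Sum>a\<in>S. \<Sum>b\<in>S. (c a - c b)^2)" by (intro sum_nonneg) auto
  also have "(\<Sum>a\<in>S. \<Sum>b\<in>S. (c a - c b)^2) = (\<Sum>a\<in>S. \<Sum>b\<in>S. (c a)^2 + (c b)^2 - 2 * (c a * c b))"
    by (intro sum.cong refl) (simp add: power2_eq_square algebra_simps)
  also have "\<dots> = 2 * real (card S) * (\<Sum>a\<in>S. (c a)^2) - 2 * (\<Sum>a\<in>S. c a)^2"
    by (simp add: sum.distrib sum_subtractf sum_distrib_left sum_distrib_right power2_eq_square
        sum_product algebra_simps)
  finally show ?thesis by simp
qed

lemma cs_cmod: fixes z :: "'a \<Rightarrow> complex" assumes "finite S"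
  shows "(cmod (\<Sum>a\<in>S. z a))^2 \<le> real (card S) * (\<Sum>a\<in>S. (cmod (z a))^2)"
proof -
  have "cmod (\<Sum>a\<in>S. z a) \<le> (\<Sum>a\<in>S. cmod (z a))" by (rule norm_sum)
  then have "(cmod (\<Sum>a\<in>S. z a))^2 \<le> (\<Sum>a\<in>S. cmod (z a))^2"
    by (intro power_mono) auto
  also have "\<dots> \<le> real (card S) * (\<Sum>a\<in>S. (cmod (z a))^2)" by (rule cs_real[OF assms])
  finally show ?thesis .
qed

lemma sq_split: "(cmod (p + q))^2 \<le> 3 * (cmod p)^2 + 3/2 * (cmod q)^2"
proof -
  have "cmod (p + q) \<le> cmod p + cmod q" by (rule norm_triangle_ineq)
  then have "(cmod (p + q))^2 \<le> (cmod p + cmod q)^2" by (intro power_mono) auto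
  also have "\<dots> \<le> 3 * (cmod p)^2 + 3/2 * (cmod q)^2"
  proof -
    have "0 \<le> 2 * (cmod p - cmod q / 2)^2" by simp
    then show ?thesis by (simp add: power2_eq_square algebra_simps)
  qed
  finally show ?thesis .
qed

lemma one_term:
  fixes u :: "nat \<Rightarrow> complex"
  assumes b: "b < K"
  shows "(cmod (\<Sum>a<K. u a))^2 \<le> 3 * (cmod (u b))^2 + 3/2 * (real K - 1) * (\<Sum>a\<in>{..<K}-{b}. (cmod (u a))^2)"
proof -
  have "(\<Sum>a<K. u a) = u b + (\<Sum>a\<in>{..<K}-{b}. u a)" using b by (subst sum.remove[of "{..<K}" b]) auto
  then have h1: "(cmod (\<Sum>a<K. u a))^2 \<le> 3 * (cmod (u b))^2 + 3/2 * (cmod (\<Sum>a\<in>{..<K}-{b}. u a))^2"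
    using sq_split by simp
  have h2: "(cmod (\<Sum>a\<in>{..<K}-{b}. u a))^2 \<le> (real K - 1) * (\<Sum>a\<in>{..<K}-{b}. (cmod (u a))^2)"
  proof -
    have "card ({..<K}-{b}) = K - 1" using b by simp
    then have "real (card ({..<K}-{b})) = real K - 1" using b by simp
    then show ?thesis using cs_cmod[of "{..<K}-{b}" u] by simp
  qed
  from h1 h2 show ?thesis by linarith
qed

lemma grid_bound:
  fixes g :: "nat \<Rightarrow> nat \<Rightarrow> real"
  assumes nn: "\<And>y y'. 0 \<le> g y y'" and a: "a < K"
  shows "(\<Sum>y'<K. g a y') + (\<Sum>y\<in>{..<K}-{a}. g y a) \<le> (\<Sum>y<K. \<Sum>y'<K. g y y')"
proof -
  have "(\<Sum>y<K. \<Sum>y'<K. g y y') = (\<Sum>y'<K. g a y') + (\<Sum>y\<in>{..<K}-{a}. \<Sum>y'<K. g y y')"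
    using a by (subst sum.remove[of "{..<K}" a]) auto
  moreover have "(\<Sum>y\<in>{..<K}-{a}. g y a) \<le> (\<Sum>y\<in>{..<K}-{a}. \<Sum>y'<K. g y y')"
    using a nn by (intro sum_mono member_le_sum) auto
  ultimately show ?thesis by simp
qed

lemma sum_diff_if: "finite A \<Longrightarrow> (\<Sum>a\<in>A-{b}. f a) = (\<Sum>a\<in>A. if a = b then 0 else f a)"
proof -
  assume "finite A"
  have "(\<Sum>a\<in>A. if a = b then 0 else f a) = (\<Sum>a\<in>A. if a \<noteq> b then f a else 0)"
    by (intro sum.cong) auto
  also have "\<dots> = sum f {a \<in> A. a \<noteq> b}" using \<open>finite A\<close> by (simp add: sum.inter_filter)
  also have "{a \<in> A. a \<noteq> b} = A - {b}" by auto
  finally show ?thesis by simp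
qed

lemma mono_vec:
  fixes w :: "nat \<Rightarrow> nat \<Rightarrow> nat \<Rightarrow> complex"
  assumes K: "K \<ge> 4"
  shows "(\<Sum>b<K. (cmod (\<Sum>a<K. w a a b))^2) + (\<Sum>b<K. (cmod (\<Sum>a<K. w a b a))^2)
     \<le> 3/2 * real K * (\<Sum>a<K. \<Sum>y<K. \<Sum>y'<K. (cmod (w a y y'))^2)"
proof -
  define x where "x a y y' = (cmod (w a y y'))^2" for a y y'
  have xnn: "0 \<le> x a y y'" for a y y' unfolding x_def by simp
  have "(\<Sum>b<K. (cmod (\<Sum>a<K. w a a b))^2) + (\<Sum>b<K. (cmod (\<Sum>a<K. w a b a))^2)
     \<le> (\<Sum>b<K. (3 * x b b b + 3/2 * (real K - 1) * (\<Sum>a\<in>{..<K}-{b}. x a a b))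
             + (3 * x b b b + 3/2 * (real K - 1) * (\<Sum>a\<in>{..<K}-{b}. x a b a)))"
    unfolding sum.distrib[symmetric] x_def
    by (intro sum_mono add_mono one_term) auto
  also have "\<dots> \<le> (\<Sum>b<K. 3/2 * real K * (x b b b + (\<Sum>a\<in>{..<K}-{b}. x a a b) + (\<Sum>a\<in>{..<K}-{b}. x a b a)))"
  proof (intro sum_mono)
    fix b
    have s1: "0 \<le> (\<Sum>a\<in>{..<K}-{b}. x a a b)" "0 \<le> (\<Sum>a\<in>{..<K}-{b}. x a b a)" "0 \<le> x b b b"
      using xnn by (auto intro: sum_nonneg)
    have K4: "real K \<ge> 4" using K by simp
    define A where "A = (\<Sum>a\<in>{..<K}-{b}. x a a b)"
    define B where "B = (\<Sum>a\<in>{..<K}-{b}. x a b a)"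
    have e1: "6 * x b b b \<le> 3/2 * real K * x b b b" using K4 s1 by (intro mult_right_mono) auto
    have e2: "3/2 * (real K - 1) * (A + B) \<le> 3/2 * real K * (A + B)"
      using s1 unfolding A_def[symmetric] B_def[symmetric] by (intro mult_right_mono) auto
    have e3: "(3 * x b b b + 3/2 * (real K - 1) * A) + (3 * x b b b + 3/2 * (real K - 1) * B)
        = 6 * x b b b + 3/2 * (real K - 1) * (A + B)" by (simp add: field_simps)
    have e4: "3/2 * real K * (x b b b + A + B) = 3/2 * real K * x b b b + 3/2 * real K * (A + B)"
      by (simp add: field_simps)
    show "(3 * x b b b + 3/2 * (real K - 1) * (\<Sum>a\<in>{..<K}-{b}. x a a b))
             + (3 * x b b b + 3/2 * (real K - 1) * (\<Sum>a\<in>{..<K}-{b}. x a b a))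
        \<le> 3/2 * real K * (x b b b + (\<Sum>a\<in>{..<K}-{b}. x a a b) + (\<Sum>a\<in>{..<K}-{b}. x a b a))"
      unfolding A_def[symmetric] B_def[symmetric] e3 e4 using e1 e2 by linarith
  qed
  also have "\<dots> = 3/2 * real K * ((\<Sum>b<K. x b b b + (\<Sum>a\<in>{..<K}-{b}. x a a b)) + (\<Sum>b<K. \<Sum>a\<in>{..<K}-{b}. x a b a))"
    by (simp add: sum_distrib_left sum.distrib algebra_simps)
  also have "(\<Sum>b<K. x b b b + (\<Sum>a\<in>{..<K}-{b}. x a a b)) = (\<Sum>b<K. \<Sum>a<K. x a a b)"
    by (intro sum.cong refl) (simp add: sum.remove)
  also have "\<dots> = (\<Sum>a<K. \<Sum>b<K. x a a b)" by (rule sum.swap)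
  also have "(\<Sum>b<K. \<Sum>a\<in>{..<K}-{b}. x a b a) = (\<Sum>a<K. \<Sum>b\<in>{..<K}-{a}. x a b a)"
  proof -
    have "(\<Sum>b<K. \<Sum>a\<in>{..<K}-{b}. x a b a) = (\<Sum>b<K. \<Sum>a<K. if a = b then 0 else x a b a)"
      by (rule sum.cong[OF refl]) (simp add: sum_diff_if)
    also have "\<dots> = (\<Sum>a<K. \<Sum>b<K. if a = b then 0 else x a b a)" by (rule sum.swap)
    also have "\<dots> = (\<Sum>a<K. \<Sum>b\<in>{..<K}-{a}. x a b a)"
    proof (rule sum.cong[OF refl])
      fix a
      have "(\<Sum>b<K. if a = b then 0 else x a b a) = (\<Sum>b<K. if b = a then 0 else x a b a)"
        by (rule sum.cong) auto
      then show "(\<Sum>b<K. if a = b then 0 else x a b a) = (\<Sum>b\<in>{..<K}-{a}. x a b a)"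
        by (simp add: sum_diff_if)
    qed
    finally show ?thesis .
  qed
  also have "3/2 * real K * ((\<Sum>a<K. \<Sum>b<K. x a a b) + (\<Sum>a<K. \<Sum>b\<in>{..<K}-{a}. x a b a)) \<le> 3/2 * real K * (\<Sum>a<K. \<Sum>y<K. \<Sum>y'<K. x a y y')"
  proof (rule mult_left_mono)
    show "(\<Sum>a<K. \<Sum>b<K. x a a b) + (\<Sum>a<K. \<Sum>b\<in>{..<K}-{a}. x a b a) \<le> (\<Sum>a<K. \<Sum>y<K. \<Sum>y'<K. x a y y')"
      unfolding sum.distrib[symmetric] by (intro sum_mono grid_bound) (auto simp: xnn)
  qed simp
  finally show ?thesis unfolding x_def .
qed

lemma swap4: "(\<Sum>i\<in>A. \<Sum>j\<in>B. \<Sum>y\<in>C. \<Sum>m\<in>M. f i j y m) = (\<Sum>m\<in>M. \<Sum>y\<in>C. \<Sum>i\<in>A. \<Sum>j\<in>B. f i j y m)"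
proof -
  have "(\<Sum>i\<in>A. \<Sum>j\<in>B. \<Sum>y\<in>C. \<Sum>m\<in>M. f i j y m) = (\<Sum>i\<in>A. \<Sum>y\<in>C. \<Sum>m\<in>M. \<Sum>j\<in>B. f i j y m)"
    by (rule sum.cong[OF refl]) (rule swap3)
  also have "\<dots> = (\<Sum>y\<in>C. \<Sum>m\<in>M. \<Sum>i\<in>A. \<Sum>j\<in>B. f i j y m)" by (rule swap3)
  also have "\<dots> = (\<Sum>m\<in>M. \<Sum>y\<in>C. \<Sum>i\<in>A. \<Sum>j\<in>B. f i j y m)" by (rule sum.swap)
  finally show ?thesis .
qed

lemma double_cnj: "(\<Sum>i\<in>A. \<Sum>j\<in>A. u i * cnj (u j)) = complex_of_real ((cmod (\<Sum>i\<in>A. u i))^2)"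
proof -
  have "(\<Sum>i\<in>A. \<Sum>j\<in>A. u i * cnj (u j)) = (\<Sum>i\<in>A. u i) * cnj (\<Sum>j\<in>A. u j)"
    by (simp add: sum_product cnj_sum)
  also have "\<dots> = complex_of_real ((cmod (\<Sum>i\<in>A. u i))^2)" by (rule complex_norm_square[symmetric])
  finally show ?thesis .
qed

lemma pow_trace:
  assumes h\<Lambda>: "\<And>i j. i<d \<Longrightarrow> j<d \<Longrightarrow> \<Lambda> (munit d i j) \<in> carrier_mat d' d'"
    and tp: "\<And>i j. i<d \<Longrightarrow> j<d \<Longrightarrow> (\<Sum>b<d'. \<Lambda> (munit d i j) $$ (b,b)) = (if i = j then 1 else 0)"
    and Y: "Y \<in> carrier_mat (d^n) (d^n)"
  shows "mtrace (tensor_pow \<Lambda> d d' n Y) = mtrace Y"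
proof -
  note pk = pow_kernel[where \<Lambda>=\<Lambda> and d=d and d'=d', OF h\<Lambda> Y]
  have "mtrace (tensor_pow \<Lambda> d d' n Y) = (\<Sum>B<d'^n. \<Sum>I<d^n. \<Sum>J<d^n. Y $$ (I,J) * kerL \<Lambda> d d' n I J B B)"
  proof -
    have "dim_row (tensor_pow \<Lambda> d d' n Y) = d'^n" using pk by auto
    then show ?thesis unfolding mtrace_def using pk by (auto intro: sum.cong)
  qed
  also have "\<dots> = (\<Sum>I<d^n. \<Sum>J<d^n. \<Sum>B<d'^n. Y $$ (I,J) * kerL \<Lambda> d d' n I J B B)"
    by (rule swap3)
  also have "\<dots> = (\<Sum>I<d^n. \<Sum>J<d^n. Y $$ (I,J) * (\<Sum>B<d'^n. kerL \<Lambda> d d' n I J B B))"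
    by (simp add: sum_distrib_left)
  also have "\<dots> = (\<Sum>I<d^n. \<Sum>J<d^n. Y $$ (I,J) * (if I = J then 1 else 0))"
    by (intro sum.cong refl) (simp add: kerL_trace[OF tp])
  also have "\<dots> = mtrace Y"
    unfolding mtrace_def using Y by (intro sum.cong) (auto simp: sum_delta_mult)
  finally show ?thesis .
qed

lemma fid_formula:
  assumes car: "\<And>k l. k < K \<Longrightarrow> l < K \<Longrightarrow> \<Psi> (munit K k l) \<in> carrier_mat K K"
  shows "ent_fid K (tensor_map (\<lambda>X. X) K K \<Psi> K K (Pplus K)) = Re ((\<Sum>i<K. \<Sum>j<K. \<Psi> (munit K i j) $$ (i,j)) / (of_nat K)^2)"
proof -
  have e: "tensor_map (\<lambda>X. X) K K \<Psi> K K (Pplus K) $$ (i*K+i, j*K+j) = \<Psi> (munit K i j) $$ (i,j) / of_nat K"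
    if i: "i < K" and j: "j < K" for i j
  proof -
    have r: "i*K+i < K*K" and c: "j*K+j < K*K" using i j by (auto intro: idx_lt)
    have "tensor_map (\<lambda>X. X) K K \<Psi> K K (Pplus K) $$ (i*K+i, j*K+j) = (\<Sum>k<K. \<Sum>l<K.
       Pplus K $$ (i*K+k, j*K+l) * \<Psi> (munit K k l) $$ (i, j))"
    proof -
      have "tensor_map (\<lambda>X. X) K K \<Psi> K K (Pplus K) $$ (i*K+i, j*K+j) = (\<Sum>k<K. \<Sum>l<K.
       Pplus K $$ (((i*K+i) div K)*K+k, ((j*K+j) div K)*K+l) * \<Psi> (munit K k l) $$ ((i*K+i) mod K, (j*K+j) mod K))"
        by (rule ti_index) (use car r c in auto)
      then show ?thesis using i j by simp
    qed
    also have "\<dots> = (\<Sum>k<K. \<Sum>l<K. (if k = i \<and> l = j then 1 else 0) * (\<Psi> (munit K k l) $$ (i, j) / of_nat K))"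
      using i j by (intro sum.cong refl) (auto simp: Pplus_index)
    also have "\<dots> = \<Psi> (munit K i j) $$ (i,j) / of_nat K" by (rule sum2_delta[OF i j])
    finally show ?thesis .
  qed
  have "ent_fid K (tensor_map (\<lambda>X. X) K K \<Psi> K K (Pplus K)) = Re ((1 / of_nat K) * (\<Sum>i<K. \<Sum>j<K. \<Psi> (munit K i j) $$ (i,j) / of_nat K))"
    unfolding ent_fid_def by (simp add: e)
  also have "\<dots> = Re ((\<Sum>i<K. \<Sum>j<K. \<Psi> (munit K i j) $$ (i,j)) / (of_nat K)^2)"
    by (simp add: sum_divide_distrib[symmetric] power2_eq_square)
  finally show ?thesis .
qed

lemma swap4b: "(\<Sum>a\<in>A. \<Sum>y\<in>B. \<Sum>y'\<in>C. \<Sum>m\<in>M. f a y y' m) = (\<Sum>m\<in>M. \<Sum>a\<in>A. \<Sum>y\<in>B. \<Sum>y'\<in>C. f a y y' m)"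
proof -
  have "(\<Sum>a\<in>A. \<Sum>y\<in>B. \<Sum>y'\<in>C. \<Sum>m\<in>M. f a y y' m) = (\<Sum>a\<in>A. \<Sum>y\<in>B. \<Sum>m\<in>M. \<Sum>y'\<in>C. f a y y' m)"
    by (intro sum.cong[OF refl]) (rule sum.swap)
  also have "\<dots> = (\<Sum>a\<in>A. \<Sum>m\<in>M. \<Sum>y\<in>B. \<Sum>y'\<in>C. f a y y' m)"
    by (rule sum.cong[OF refl]) (rule sum.swap)
  also have "\<dots> = (\<Sum>m\<in>M. \<Sum>a\<in>A. \<Sum>y\<in>B. \<Sum>y'\<in>C. f a y y' m)" by (rule sum.swap)
  finally show ?thesis .
qed

lemma protocol_bound:
  assumes d1: "d \<ge> 1" and ch: "channel d d' \<Lambda>" and se: "sym_extendible d d' (choi d d' \<Lambda>)"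
    and pr: "oneway_protocol d d' n K Es Ds" and K4: "K \<ge> 4"
  shows "protocol_fid d d' \<Lambda> n K Es Ds \<le> 3/4"
proof -
  have cp\<Lambda>: "cp_map d d' \<Lambda>" using ch by (simp add: channel_def)
  have h\<Lambda>: "\<And>i j. i<d \<Longrightarrow> j<d \<Longrightarrow> \<Lambda> (munit d i j) \<in> carrier_mat d' d'" using cp\<Lambda> unfolding cp_map_def by simp
  have tp\<Lambda>: "(\<Sum>b<d'. \<Lambda> (munit d i j) $$ (b,b)) = (if i = j then 1 else 0)" if ij: "i<d" "j<d" for i j
  proof -
    have "mtrace (\<Lambda> (munit d i j)) = mtrace (munit d i j)" using ch ij unfolding channel_def tp_map_def by simp
    moreover have "mtrace (\<Lambda> (munit d i j)) = (\<Sum>b<d'. \<Lambda> (munit d i j) $$ (b,b))"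
      using h\<Lambda>[OF ij] unfolding mtrace_def by simp
    ultimately show ?thesis using mtrace_munit[OF ij] by simp
  qed
  obtain \<sigma> where \<sigma>d: "density (d*d'*d') \<sigma>"
    and \<sigma>s: "\<forall>a b b' c e e'. a < d \<longrightarrow> b < d' \<longrightarrow> b' < d' \<longrightarrow> c < d \<longrightarrow> e < d' \<longrightarrow> e' < d' \<longrightarrow>
           \<sigma> $$ ((a*d'+b)*d'+b', (c*d'+e)*d'+e') = \<sigma> $$ ((a*d'+b')*d'+b, (c*d'+e')*d'+e)"
    and \<sigma>p: "ptrace_last (d*d') d' \<sigma> = choi d d' \<Lambda>"
    using se unfolding sym_extendible_def by blast
  have hm: "(\<Sum>e<d'. lamT \<sigma> d d' i j b e c e) = \<Lambda> (munit d i j) $$ (b,c)"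
    if "i<d" "j<d" "b<d'" "c<d'" for i j b c
  proof -
    have r: "i*d'+b < d*d'" and c: "j*d'+c < d*d'" using that by (auto intro: idx_lt)
    have "(\<Sum>e<d'. lamT \<sigma> d d' i j b e c e) = of_nat d * (\<Sum>e<d'. \<sigma> $$ ((i*d'+b)*d'+e, (j*d'+c)*d'+e))"
      unfolding lamT_def by (simp add: sum_distrib_left)
    also have "(\<Sum>e<d'. \<sigma> $$ ((i*d'+b)*d'+e, (j*d'+c)*d'+e)) = ptrace_last (d*d') d' \<sigma> $$ (i*d'+b, j*d'+c)"
      unfolding ptrace_last_def using r c by simp
    also have "\<dots> = \<Lambda> (munit d i j) $$ (b,c) / of_nat d"
      unfolding \<sigma>p using choi_index[where \<Lambda>=\<Lambda> and d=d and d'=d', OF h\<Lambda> r c] that by simp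
    finally show ?thesis using d1 by simp
  qed
  have hs: "lamT \<sigma> d d' i j b b' c c' = lamT \<sigma> d d' i j b' b c' c"
    if "i<d" "j<d" "b<d'" "b'<d'" "c<d'" "c'<d'" for i j b b' c c'
    unfolding lamT_def using \<sigma>s that by simp
  obtain g where g: "\<forall>r<d*d'*d'. \<forall>c<d*d'*d'. \<sigma> $$ (r,c) = (\<Sum>m<d*d'*d'. g m r * cnj (g m c))"
    using gram[OF psd_pf] \<sigma>d unfolding density_def by blast
  have g': "\<And>r c. r < d*d'*d' \<Longrightarrow> c < d*d'*d' \<Longrightarrow> \<sigma> $$ (r,c) = (\<Sum>m<d*d'*d'. g m r * cnj (g m c))"
    using g by blast
  obtain MG :: nat and G where hG: "\<forall>I J B1 B1' B2 B2'. I < d^n \<longrightarrow> J < d^n \<longrightarrow> B1 < d'^n \<longrightarrow> B1' < d'^n \<longrightarrow> B2 < d'^n \<longrightarrow> B2' < d'^n \<longrightarrow>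
    kerT \<sigma> d d' n I J B1 B1' B2 B2' = (\<Sum>m<MG. G m I B1 B1' * cnj (G m J B2 B2'))"
    using kerT_gram[where D="d*d'*d'" and g=g and \<sigma>=\<sigma> and d=d and d'=d' and n=n, OF g'] by blast
  define L where "L = length Es"
  have Ecp: "cp_map K (d^n) (Es ! x)" if "x < L" for x using pr that unfolding oneway_protocol_def L_def by auto
  have Dch: "channel (d'^n) K (Ds ! x)" if "x < L" for x using pr that unfolding oneway_protocol_def L_def by auto
  define \<Psi> where "\<Psi> x a a' = (Ds ! x) (tensor_pow \<Lambda> d d' n ((Es ! x) (munit K a a')))" for x a a'
  define Q where "Q x (p :: ((((nat\<times>nat)\<times>nat)\<times>nat) \<Rightarrow> nat \<Rightarrow> nat \<Rightarrow> nat \<Rightarrow> complex) \<times> ((((nat\<times>nat)\<times>nat)\<times>nat) set)) \<longleftrightarrow>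
   (\<forall>a a' y z. a<K \<longrightarrow> a'<K \<longrightarrow> y<K \<longrightarrow> z<K \<longrightarrow>
      \<Psi> x a a' $$ (y,z) = (\<Sum>y'<K. \<Sum>\<mu>\<in>snd p. fst p \<mu> a y y' * cnj (fst p \<mu> a' z y'))) \<and>
   (\<forall>a a' y' z'. a<K \<longrightarrow> a'<K \<longrightarrow> y'<K \<longrightarrow> z'<K \<longrightarrow>
      \<Psi> x a a' $$ (y',z') = (\<Sum>y<K. \<Sum>\<mu>\<in>snd p. fst p \<mu> a y y' * cnj (fst p \<mu> a' y z')))" for x p
  have ex: "\<exists>p. Q x p" if x: "x < L" for x
    using branch[OF h\<Lambda> hm hs hG Ecp[OF x] Dch[OF x]] unfolding Q_def \<Psi>_def by auto
  define f where "f x = (SOME p. Q x p)" for x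
  have fQ: "Q x (f x)" if "x < L" for x unfolding f_def by (rule someI_ex[OF ex[OF that]])
  define w where "w x = fst (f x)" for x
  define W where "W x = snd (f x)" for x
  have hA: "\<Psi> x a a' $$ (y,z) = (\<Sum>y'<K. \<Sum>\<mu>\<in>W x. w x \<mu> a y y' * cnj (w x \<mu> a' z y'))"
    if "x < L" "a<K" "a'<K" "y<K" "z<K" for x a a' y z
    using fQ[OF that(1)] that unfolding Q_def w_def W_def by blast
  have hB: "\<Psi> x a a' $$ (y',z') = (\<Sum>y<K. \<Sum>\<mu>\<in>W x. w x \<mu> a y y' * cnj (w x \<mu> a' y z'))"
    if "x < L" "a<K" "a'<K" "y'<K" "z'<K" for x a a' y' z'
    using fQ[OF that(1)] that unfolding Q_def w_def W_def by blast
  define F1 where "F1 x = (\<Sum>\<mu>\<in>W x. \<Sum>b<K. (cmod (\<Sum>a<K. w x \<mu> a a b))^2)" for x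
  define F2 where "F2 x = (\<Sum>\<mu>\<in>W x. \<Sum>b<K. (cmod (\<Sum>a<K. w x \<mu> a b a))^2)" for x
  define Nr where "Nr x = (\<Sum>\<mu>\<in>W x. \<Sum>a<K. \<Sum>y<K. \<Sum>y'<K. (cmod (w x \<mu> a y y'))^2)" for x
  have Ecar: "(Es ! x) (munit K a a') \<in> carrier_mat (d^n) (d^n)" if "x < L" "a < K" "a' < K" for x a a'
    using Ecp[OF that(1)] that unfolding cp_map_def by simp
  have Pcar: "tensor_pow \<Lambda> d d' n ((Es ! x) (munit K a a')) \<in> carrier_mat (d'^n) (d'^n)" if "x < L" "a < K" "a' < K" for x a a'
    using pow_kernel[where \<Lambda>=\<Lambda> and d=d and d'=d', OF h\<Lambda> Ecar[OF that]] by simp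
  have Psicar: "\<Psi> x a a' \<in> carrier_mat K K" if "x < L" "a < K" "a' < K" for x a a'
    using Dch[OF that(1)] Pcar[OF that] unfolding channel_def cp_map_def \<Psi>_def by simp
  have fid: "ent_fid K (tensor_map (\<lambda>X. X) K K (\<lambda>M. (Ds ! x) (tensor_pow \<Lambda> d d' n ((Es ! x) M))) K K (Pplus K))
      = Re ((\<Sum>i<K. \<Sum>j<K. \<Psi> x i j $$ (i,j)) / (of_nat K)^2)" if "x < L" for x
    unfolding \<Psi>_def by (rule fid_formula) (use Psicar[OF that] in \<open>auto simp: \<Psi>_def\<close>)
  have c1: "(\<Sum>i<K. \<Sum>j<K. \<Psi> x i j $$ (i,j)) = complex_of_real (F1 x)" if x: "x < L" for x
  proof -
    have "(\<Sum>i<K. \<Sum>j<K. \<Psi> x i j $$ (i,j)) = (\<Sum>i<K. \<Sum>j<K. \<Sum>y'<K. \<Sum>\<mu>\<in>W x. w x \<mu> i i y' * cnj (w x \<mu> j j y'))"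
      using x by (intro sum.cong refl) (simp add: hA)
    also have "\<dots> = (\<Sum>\<mu>\<in>W x. \<Sum>y'<K. \<Sum>i<K. \<Sum>j<K. w x \<mu> i i y' * cnj (w x \<mu> j j y'))" by (rule swap4)
    also have "\<dots> = (\<Sum>\<mu>\<in>W x. \<Sum>y'<K. complex_of_real ((cmod (\<Sum>i<K. w x \<mu> i i y'))^2))"
      by (simp only: double_cnj)
    also have "\<dots> = complex_of_real (F1 x)" unfolding F1_def by simp
    finally show ?thesis .
  qed
  have c2: "(\<Sum>i<K. \<Sum>j<K. \<Psi> x i j $$ (i,j)) = complex_of_real (F2 x)" if x: "x < L" for x
  proof -
    have "(\<Sum>i<K. \<Sum>j<K. \<Psi> x i j $$ (i,j)) = (\<Sum>i<K. \<Sum>j<K. \<Sum>y<K. \<Sum>\<mu>\<in>W x. w x \<mu> i y i * cnj (w x \<mu> j y j))"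
      using x by (intro sum.cong refl) (simp add: hB)
    also have "\<dots> = (\<Sum>\<mu>\<in>W x. \<Sum>y<K. \<Sum>i<K. \<Sum>j<K. w x \<mu> i y i * cnj (w x \<mu> j y j))" by (rule swap4)
    also have "\<dots> = (\<Sum>\<mu>\<in>W x. \<Sum>y<K. complex_of_real ((cmod (\<Sum>i<K. w x \<mu> i y i))^2))"
      by (simp only: double_cnj)
    also have "\<dots> = complex_of_real (F2 x)" unfolding F2_def by simp
    finally show ?thesis .
  qed
  have c3: "(\<Sum>a<K. mtrace (\<Psi> x a a)) = complex_of_real (Nr x)" if x: "x < L" for x
  proof -
    have "(\<Sum>a<K. mtrace (\<Psi> x a a)) = (\<Sum>a<K. \<Sum>y<K. \<Psi> x a a $$ (y,y))"
      unfolding mtrace_def using Psicar[OF x] by (intro sum.cong refl) auto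
    also have "\<dots> = (\<Sum>a<K. \<Sum>y<K. \<Sum>y'<K. \<Sum>\<mu>\<in>W x. w x \<mu> a y y' * cnj (w x \<mu> a y y'))"
      using x by (intro sum.cong refl) (simp add: hA)
    also have "\<dots> = (\<Sum>\<mu>\<in>W x. \<Sum>a<K. \<Sum>y<K. \<Sum>y'<K. w x \<mu> a y y' * cnj (w x \<mu> a y y'))" by (rule swap4b)
    also have "\<dots> = (\<Sum>\<mu>\<in>W x. \<Sum>a<K. \<Sum>y<K. \<Sum>y'<K. complex_of_real ((cmod (w x \<mu> a y y'))^2))"
      by (simp only: complex_norm_square)
    also have "\<dots> = complex_of_real (Nr x)" unfolding Nr_def by simp
    finally show ?thesis .
  qed
  have c4: "mtrace (\<Psi> x a a) = mtrace ((Es ! x) (munit K a a))" if "x < L" "a < K" for x a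
  proof -
    have "mtrace (\<Psi> x a a) = mtrace (tensor_pow \<Lambda> d d' n ((Es ! x) (munit K a a)))"
      using Dch[OF that(1)] Pcar[OF that(1,2,2)] unfolding channel_def tp_map_def \<Psi>_def by simp
    also have "\<dots> = mtrace ((Es ! x) (munit K a a))"
      by (rule pow_trace[OF h\<Lambda> tp\<Lambda> Ecar[OF that(1,2,2)]])
    finally show ?thesis .
  qed
  have c5: "(\<Sum>x<L. \<Sum>a<K. mtrace ((Es ! x) (munit K a a))) = of_nat K"
  proof -
    have "(\<Sum>x<L. \<Sum>a<K. mtrace ((Es ! x) (munit K a a))) = (\<Sum>a<K. \<Sum>x<L. mtrace ((Es ! x) (munit K a a)))"
      by (rule sum.swap)
    also have "\<dots> = (\<Sum>a<K. mtrace (munit K a a))"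
      using pr unfolding oneway_protocol_def L_def by (intro sum.cong refl) simp
    also have "\<dots> = (\<Sum>a<K. 1)" by (intro sum.cong refl) (simp add: mtrace_munit)
    finally show ?thesis by simp
  qed
  have NrK: "(\<Sum>x<L. Nr x) = real K"
  proof -
    have "complex_of_real (\<Sum>x<L. Nr x) = (\<Sum>x<L. \<Sum>a<K. mtrace (\<Psi> x a a))"
      by (simp add: c3)
    also have "\<dots> = (\<Sum>x<L. \<Sum>a<K. mtrace ((Es ! x) (munit K a a)))"
      by (intro sum.cong refl) (simp add: c4)
    also have "\<dots> = of_nat K" by (rule c5)
    finally show ?thesis by (metis of_real_eq_iff of_real_of_nat_eq)
  qed
  have mv: "F1 x + F2 x \<le> 3/2 * real K * Nr x" for x
  proof -
    have "F1 x + F2 x = (\<Sum>\<mu>\<in>W x. (\<Sum>b<K. (cmod (\<Sum>a<K. w x \<mu> a a b))^2) + (\<Sum>b<K. (cmod (\<Sum>a<K. w x \<mu> a b a))^2))"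
      unfolding F1_def F2_def by (simp add: sum.distrib)
    also have "\<dots> \<le> (\<Sum>\<mu>\<in>W x. 3/2 * real K * (\<Sum>a<K. \<Sum>y<K. \<Sum>y'<K. (cmod (w x \<mu> a y y'))^2))"
      by (intro sum_mono mono_vec K4)
    also have "\<dots> = 3/2 * real K * Nr x" unfolding Nr_def by (simp add: sum_distrib_left)
    finally show ?thesis .
  qed
  have K0: "real K > 0" using K4 by simp
  have "protocol_fid d d' \<Lambda> n K Es Ds = (\<Sum>x<L. F1 x / (real K)^2)"
    unfolding protocol_fid_def L_def[symmetric]
    by (intro sum.cong refl) (simp add: fid c1)
  moreover have "protocol_fid d d' \<Lambda> n K Es Ds = (\<Sum>x<L. F2 x / (real K)^2)"
    unfolding protocol_fid_def L_def[symmetric]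
    by (intro sum.cong refl) (simp add: fid c2)
  ultimately have "2 * protocol_fid d d' \<Lambda> n K Es Ds = (\<Sum>x<L. (F1 x + F2 x) / (real K)^2)"
    by (simp add: sum.distrib add_divide_distrib)
  also have "\<dots> \<le> (\<Sum>x<L. 3/2 * real K * Nr x / (real K)^2)"
    by (intro sum_mono divide_right_mono mv) simp
  also have "\<dots> = 3/2 / real K * (\<Sum>x<L. Nr x)"
    using K0 by (simp add: sum_distrib_left power2_eq_square)
  also have "\<dots> = 3/2" using NrK K0 by simp
  finally show ?thesis by simp
qed

definition E0 :: "nat \<Rightarrow> complex mat \<Rightarrow> complex mat" where
  "E0 N A = A $$ (0,0) \<cdot>\<^sub>m munit N 0 0"

definition D0 :: "complex mat \<Rightarrow> complex mat" where
  "D0 M = mat 1 1 (\<lambda>_. mtrace M)"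

lemma pf_nonneg_sum: "(\<And>k. k \<in> S \<Longrightarrow> 0 \<le> f k) \<Longrightarrow> 0 \<le> (\<Sum>k\<in>S. f k :: complex)"
  by (rule sum_nonneg)

lemma cp_E0:
  assumes N: "N \<ge> 1"
  shows "cp_map 1 N (E0 N)"
  unfolding cp_map_def
proof (intro conjI allI impI ballI)
  show "lin_map 1 (E0 N)"
    unfolding lin_map_def E0_def
    by (auto intro!: eq_matI simp: algebra_simps)
next
  fix A :: "complex mat" assume "A \<in> carrier_mat 1 1"
  show "E0 N A \<in> carrier_mat N N" unfolding E0_def by simp
next
  fix m M assume ps: "psd (m*1) M"
  let ?T = "tensor_map (\<lambda>X. X) m m (E0 N) 1 N M"
  have h2: "\<And>k l. k<1 \<Longrightarrow> l<1 \<Longrightarrow> E0 N (munit 1 k l) \<in> carrier_mat N N" unfolding E0_def by simp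
  have Tent: "?T $$ (r,c) = M $$ (r div N, c div N) * (if r mod N = 0 \<and> c mod N = 0 then 1 else 0)"
    if r: "r < m*N" and c: "c < m*N" for r c
  proof -
    have "?T $$ (r,c) = (\<Sum>k<1. \<Sum>l<1. M $$ ((r div N)*1+k, (c div N)*1+l) * E0 N (munit 1 k l) $$ (r mod N, c mod N))"
      by (rule ti_index) (use h2 r c in auto)
    also have "\<dots> = M $$ (r div N, c div N) * (if r mod N = 0 \<and> c mod N = 0 then 1 else 0)"
      using r c N unfolding E0_def by (simp add: mod_lt)
    finally show ?thesis .
  qed
  have "pf (m*N) (\<lambda>i j. ?T $$ (i,j))"
    unfolding pf_def
  proof
    fix v :: "nat \<Rightarrow> complex"
    have "qf (m*N) (\<lambda>i j. ?T $$ (i,j)) v = (\<Sum>i<m. \<Sum>j<m. \<Sum>k<N. \<Sum>l<N.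
        cnj (v (i*N+k)) * ?T $$ (i*N+k, j*N+l) * v (j*N+l))"
      unfolding qf_def by (rule sum_idx2)
    also have "\<dots> = (\<Sum>i<m. \<Sum>j<m. \<Sum>k<N. \<Sum>l<N.
        (if k = 0 \<and> l = 0 then 1 else 0) * (cnj (v (i*N+k)) * M $$ (i,j) * v (j*N+l)))"
    proof (intro sum.cong refl)
      fix i j k l assume "i \<in> {..<m}" "j \<in> {..<m}" "k \<in> {..<N}" "l \<in> {..<N}"
      then have "?T $$ (i*N+k, j*N+l) = M $$ (i,j) * (if k = 0 \<and> l = 0 then 1 else 0)"
        using Tent[of "i*N+k" "j*N+l"] by (simp add: idx_lt)
      then show "cnj (v (i*N+k)) * ?T $$ (i*N+k, j*N+l) * v (j*N+l) =
        (if k = 0 \<and> l = 0 then 1 else 0) * (cnj (v (i*N+k)) * M $$ (i,j) * v (j*N+l))" by simp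
    qed
    also have "\<dots> = (\<Sum>i<m. \<Sum>j<m. cnj (v (i*N)) * M $$ (i,j) * v (j*N))"
      using N by (intro sum.cong refl) (simp add: sum2_delta)
    also have "\<dots> = qf m (\<lambda>i j. M $$ (i,j)) (\<lambda>i. v (i*N))" unfolding qf_def by simp
    finally show "0 \<le> qf (m*N) (\<lambda>i j. ?T $$ (i,j)) v"
      using psd_pf[OF ps] unfolding pf_def by simp
  qed
  then show "psd (m*N) ?T" by (intro pf_psd) simp_all
qed

lemma mtrace_add: "A \<in> carrier_mat n n \<Longrightarrow> B \<in> carrier_mat n n \<Longrightarrow> mtrace (A + B) = mtrace A + mtrace B"
  unfolding mtrace_def by (simp add: sum.distrib)

lemma mtrace_smult: "A \<in> carrier_mat n n \<Longrightarrow> mtrace (a \<cdot>\<^sub>m A) = a * mtrace A"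
  unfolding mtrace_def by (auto simp: sum_distrib_left intro: sum.cong)

lemma channel_D0:
  assumes N: "N \<ge> 1"
  shows "channel N 1 D0"
  unfolding channel_def cp_map_def tp_map_def
proof (intro conjI allI impI ballI)
  show "lin_map N D0"
    unfolding lin_map_def D0_def
    by (auto intro!: eq_matI simp: mtrace_add mtrace_smult)
next
  fix A :: "complex mat" assume "A \<in> carrier_mat N N"
  show "D0 A \<in> carrier_mat 1 1" unfolding D0_def by simp
next
  fix A :: "complex mat" assume "A \<in> carrier_mat N N"
  show "mtrace (D0 A) = mtrace A" unfolding D0_def by (simp add: mtrace_def)
next
  fix m M assume ps: "psd (m*N) M"
  let ?T = "tensor_map (\<lambda>X. X) m m D0 N 1 M"
  have h2: "\<And>k l. k<N \<Longrightarrow> l<N \<Longrightarrow> D0 (munit N k l) \<in> carrier_mat 1 1" unfolding D0_def by simp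
  have Tent: "?T $$ (r,c) = (\<Sum>k<N. M $$ (r*N+k, c*N+k))"
    if r0: "r < m" and c0: "c < m" for r c
  proof -
    have r: "r < m*1" and c: "c < m*1" using r0 c0 by simp_all
    have "?T $$ (r,c) = (\<Sum>k<N. \<Sum>l<N. M $$ ((r div 1)*N+k, (c div 1)*N+l) * D0 (munit N k l) $$ (r mod 1, c mod 1))"
      by (rule ti_index) (use h2 r c in auto)
    also have "\<dots> = (\<Sum>k<N. \<Sum>l<N. M $$ (r*N+k, c*N+l) * (if k = l then 1 else 0))"
      unfolding D0_def by (intro sum.cong refl) (simp add: mtrace_munit)
    also have "\<dots> = (\<Sum>k<N. M $$ (r*N+k, c*N+k))"
      by (intro sum.cong refl) (simp add: sum_delta_mult)
    finally show ?thesis .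
  qed
  have "pf (m*1) (\<lambda>i j. ?T $$ (i,j))"
    unfolding pf_def
  proof
    fix v :: "nat \<Rightarrow> complex"
    define u where "u k I = (if I mod N = k then v (I div N) else 0)" for k I
    have qk: "qf (m*N) (\<lambda>i j. M $$ (i,j)) (u k) = (\<Sum>i<m. \<Sum>j<m. cnj (v i) * M $$ (i*N+k, j*N+k) * v j)"
      if k: "k < N" for k
    proof -
      have "qf (m*N) (\<lambda>i j. M $$ (i,j)) (u k) = (\<Sum>i<m. \<Sum>j<m. \<Sum>k'<N. \<Sum>l'<N.
        cnj (u k (i*N+k')) * M $$ (i*N+k', j*N+l') * u k (j*N+l'))"
        unfolding qf_def by (rule sum_idx2)
      also have "\<dots> = (\<Sum>i<m. \<Sum>j<m. \<Sum>k'<N. \<Sum>l'<N.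
        (if k' = k \<and> l' = k then 1 else 0) * (cnj (v i) * M $$ (i*N+k', j*N+l') * v j))"
        unfolding u_def by (intro sum.cong refl) auto
      also have "\<dots> = (\<Sum>i<m. \<Sum>j<m. cnj (v i) * M $$ (i*N+k, j*N+k) * v j)"
        using k by (intro sum.cong refl) (simp add: sum2_delta)
      finally show ?thesis .
    qed
    have "qf (m*1) (\<lambda>i j. ?T $$ (i,j)) v = (\<Sum>i<m. \<Sum>j<m. \<Sum>k<N. cnj (v i) * M $$ (i*N+k, j*N+k) * v j)"
      unfolding qf_def mult_1_right
    proof (intro sum.cong refl)
      fix i j assume "i \<in> {..<m}" "j \<in> {..<m}"
      then have "?T $$ (i,j) = (\<Sum>k<N. M $$ (i*N+k, j*N+k))" using Tent by simp
      then show "cnj (v i) * ?T $$ (i,j) * v j = (\<Sum>k<N. cnj (v i) * M $$ (i*N+k, j*N+k) * v j)"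
        by (simp add: sum_distrib_left sum_distrib_right)
    qed
    also have "\<dots> = (\<Sum>k<N. \<Sum>i<m. \<Sum>j<m. cnj (v i) * M $$ (i*N+k, j*N+k) * v j)"
      by (rule swap3')
    also have "\<dots> = (\<Sum>k<N. qf (m*N) (\<lambda>i j. M $$ (i,j)) (u k))"
      by (intro sum.cong refl) (simp add: qk)
    finally show "0 \<le> qf (m*1) (\<lambda>i j. ?T $$ (i,j)) v"
      using psd_pf[OF ps] unfolding pf_def by (simp add: sum_nonneg)
  qed
  moreover have "?T \<in> carrier_mat (m*1) (m*1)" by (rule tm_carrier)
  ultimately show "psd (m*1) ?T" by (intro pf_psd)
qed

lemma achieve0:
  assumes d1: "d \<ge> 1" and d'1: "d' \<ge> 1" and ch: "channel d d' \<Lambda>"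
  shows "oneway_achievable d d' \<Lambda> 0"
  unfolding oneway_achievable_def
proof (intro allI impI)
  fix \<epsilon> \<delta> :: real assume e: "\<epsilon> > 0" and "\<delta> > 0"
  have cp\<Lambda>: "cp_map d d' \<Lambda>" using ch by (simp add: channel_def)
  have h\<Lambda>: "\<And>i j. i<d \<Longrightarrow> j<d \<Longrightarrow> \<Lambda> (munit d i j) \<in> carrier_mat d' d'" using cp\<Lambda> unfolding cp_map_def by simp
  have tp\<Lambda>: "(\<Sum>b<d'. \<Lambda> (munit d i j) $$ (b,b)) = (if i = j then 1 else 0)" if ij: "i<d" "j<d" for i j
  proof -
    have "mtrace (\<Lambda> (munit d i j)) = mtrace (munit d i j)" using ch ij unfolding channel_def tp_map_def by simp
    moreover have "mtrace (\<Lambda> (munit d i j)) = (\<Sum>b<d'. \<Lambda> (munit d i j) $$ (b,b))"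
      using h\<Lambda>[OF ij] unfolding mtrace_def by simp
    ultimately show ?thesis using mtrace_munit[OF ij] by simp
  qed
  show "\<exists>N. \<forall>n\<ge>N. \<exists>K Es Ds. K \<ge> 1 \<and> real n * (0 - \<delta>) \<le> log 2 (real K) \<and>
        oneway_protocol d d' n K Es Ds \<and> 1 - \<epsilon> \<le> protocol_fid d d' \<Lambda> n K Es Ds"
  proof (rule exI[of _ 0], intro allI impI)
    fix n :: nat
    define N where "N = d^n"
    have N1: "N \<ge> 1" using d1 unfolding N_def by simp
    have N'1: "d'^n \<ge> 1" using d'1 by simp
    have mt1: "mtrace (munit N 0 0) = 1" using N1 by (simp add: mtrace_munit)
    have prot: "oneway_protocol d d' n 1 [E0 N] [D0]"
      unfolding oneway_protocol_def
    proof (intro conjI allI impI ballI)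
      show "length [D0] = length [E0 N]" by simp
    next
      fix x assume "x < length [E0 N]"
      then show "cp_map 1 (d^n) ([E0 N] ! x)" using cp_E0[OF N1] unfolding N_def by simp
    next
      fix A :: "complex mat" assume A: "A \<in> carrier_mat 1 1"
      have "mtrace (E0 N A) = A $$ (0,0)" unfolding E0_def using mtrace_smult[of "munit N 0 0" N "A $$ (0,0)"] mt1 by simp
      moreover have "mtrace A = A $$ (0,0)" using A unfolding mtrace_def by simp
      ultimately show "(\<Sum>x<length [E0 N]. mtrace (([E0 N] ! x) A)) = mtrace A" by simp
    next
      fix x assume "x < length [D0]"
      then show "channel (d'^n) 1 ([D0] ! x)" using channel_D0[OF N'1] by simp
    qed
    have car: "\<And>k l. k < 1 \<Longrightarrow> l < 1 \<Longrightarrow> (\<lambda>M. D0 (tensor_pow \<Lambda> d d' n (E0 N M))) (munit 1 k l) \<in> carrier_mat 1 1"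
      unfolding D0_def by simp
    have "protocol_fid d d' \<Lambda> n 1 [E0 N] [D0] = ent_fid 1 (tensor_map (\<lambda>X. X) 1 1 (\<lambda>M. D0 (tensor_pow \<Lambda> d d' n (E0 N M))) 1 1 (Pplus 1))"
      unfolding protocol_fid_def by simp
    also have "\<dots> = Re ((\<Sum>i<1. \<Sum>j<1. D0 (tensor_pow \<Lambda> d d' n (E0 N (munit 1 i j))) $$ (i,j)) / (of_nat 1)^2)"
      by (rule fid_formula) (use car in auto)
    also have "\<dots> = Re (mtrace (tensor_pow \<Lambda> d d' n (E0 N (munit 1 0 0))))"
      unfolding D0_def by simp
    also have "\<dots> = Re (mtrace (E0 N (munit 1 0 0)))"
    proof -
      have "E0 N (munit 1 0 0) \<in> carrier_mat (d^n) (d^n)" unfolding E0_def N_def by simp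
      then show ?thesis using pow_trace[OF h\<Lambda> tp\<Lambda>] by simp
    qed
    also have "\<dots> = 1" unfolding E0_def using mtrace_smult[of "munit N 0 0" N] mt1 by simp
    finally have "protocol_fid d d' \<Lambda> n 1 [E0 N] [D0] = 1" .
    then show "\<exists>K Es Ds. K \<ge> 1 \<and> real n * (0 - \<delta>) \<le> log 2 (real K) \<and>
        oneway_protocol d d' n K Es Ds \<and> 1 - \<epsilon> \<le> protocol_fid d d' \<Lambda> n K Es Ds"
      using prot e \<open>\<delta> > 0\<close> by (intro exI[of _ 1] exI[of _ "[E0 N]"] exI[of _ "[D0]"]) (simp add: mult_nonneg_nonpos)
  qed
qed

lemma no_positive_rate:
  assumes d1: "d \<ge> 1" and ch: "channel d d' \<Lambda>" and se: "sym_extendible d d' (choi d d' \<Lambda>)"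
    and R: "R > 0" and ach: "oneway_achievable d d' \<Lambda> R"
  shows False
proof -
  obtain N where hN: "\<forall>n\<ge>N. \<exists>K Es Ds. K \<ge> 1 \<and> log 2 (real K) \<ge> real n * (R - R/2) \<and>
        oneway_protocol d d' n K Es Ds \<and> protocol_fid d d' \<Lambda> n K Es Ds \<ge> 1 - 1/8"
  proof -
    have h: "\<And>\<epsilon> \<delta>. \<epsilon> > 0 \<Longrightarrow> \<delta> > 0 \<Longrightarrow> \<exists>N. \<forall>n\<ge>N. \<exists>K Es Ds. K \<ge> 1 \<and> log 2 (real K) \<ge> real n * (R - \<delta>) \<and>
        oneway_protocol d d' n K Es Ds \<and> protocol_fid d d' \<Lambda> n K Es Ds \<ge> 1 - \<epsilon>"
      using ach unfolding oneway_achievable_def by blast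
    have p1: "(1/8::real) > 0" by simp
    have p2: "R/2 > 0" using R by simp
    show ?thesis using h[OF p1 p2] that by blast
  qed
  define n where "n = N + nat \<lceil>4 / R\<rceil>"
  have "n \<ge> N" unfolding n_def by simp
  then obtain K Es Ds where K1: "K \<ge> 1" and lg: "log 2 (real K) \<ge> real n * (R - R/2)"
    and pr: "oneway_protocol d d' n K Es Ds" and fid: "protocol_fid d d' \<Lambda> n K Es Ds \<ge> 1 - 1/8"
    using hN by blast
  have "real n \<ge> 4 / R" unfolding n_def by linarith
  then have "4 / R * (R/2) \<le> real n * (R/2)" using R by (intro mult_right_mono) auto
  moreover have "4 / R * (R/2) = 2" using R by simp
  moreover have "R - R/2 = R/2" by simp
  ultimately have "log 2 (real K) \<ge> 2" using lg by simp
  then have "2 powr 2 \<le> real K" using K1 by (subst (asm) le_log_iff) auto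
  then have "K \<ge> 4" by simp
  then have "protocol_fid d d' \<Lambda> n K Es Ds \<le> 3/4" by (rule protocol_bound[OF d1 ch se pr])
  then show False using fid by simp
qed

theorem mainTheorem2:
  fixes d d' :: nat and \<Lambda> :: "complex mat \<Rightarrow> complex mat"
  assumes "d \<ge> 1" and "d' \<ge> 1"
    and "channel d d' \<Lambda>"
    and "sym_extendible d d' (choi d d' \<Lambda>)"
  shows "Q_oneway d d' \<Lambda> = 0"
proof -
  have "{R. 0 \<le> R \<and> oneway_achievable d d' \<Lambda> R} = {0}"
  proof
    show "{0} \<subseteq> {R. 0 \<le> R \<and> oneway_achievable d d' \<Lambda> R}"
      using achieve0[OF assms(1,2,3)] by simp
    show "{R. 0 \<le> R \<and> oneway_achievable d d' \<Lambda> R} \<subseteq> {0}"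
    proof
      fix R assume "R \<in> {R. 0 \<le> R \<and> oneway_achievable d d' \<Lambda> R}"
      then have "0 \<le> R" "oneway_achievable d d' \<Lambda> R" by auto
      moreover have "\<not> R > 0 \<or> \<not> oneway_achievable d d' \<Lambda> R"
        using no_positive_rate[OF assms(1,3,4)] by blast
      ultimately show "R \<in> {0}" by auto
    qed
  qed
  then show ?thesis unfolding Q_oneway_def by (simp add: zero_ereal_def)
qed

end
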